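(* Let $F_N(t)$ be a solution of the thermostatted Kac master equation with finite second moment, and let $K(t)=\int_{\mathbb{R}^N}\|v\|^2F_N(t,v)\,dv$ be its kinetic energy. Then $K(t)$ converges exponentially fast to $NK_g$ with rate $\mu/2$, i.e. $|K(t)-NK_g|\le |K(0)-NK_g|\,e^{-\mu t/2}$ for $t\ge0$.
   Context: Fix $N\ge2$, rates $\lambda>0,\mu>0$ and a probability density $g$ on $\mathbb{R}$ with $g\in L^2$, zero mean and finite second moment $K_g=\int w^2g(w)dw$. The master equation is $\partial_t F_N=-\lambda N(I-Q)[F_N]-\mu\sum_{j=1}^N(I-R_j)[F_N]$, with $Q[F](v)=\binom{N}{2}^{-1}\sum_{i<j}\frac{1}{2\pi}\int_0^{2\pi}F(v_{ij}(\theta))d\theta$ and $R_j[F](v)=\int_{\mathbb{R}}\frac{1}{2\pi}\int_0^{2\pi}g(w\cos\theta-v_j\sin\theta)F(v_j(w,\theta))d\theta dw$, where $v_{ij}(\theta)$ replaces $(v_i,v_j)$ by $(v_i\cos\theta+v_j\sin\theta,-v_i\sin\theta+v_j\cos\theta)$ and $v_j(w,\theta)$ replaces $v_j$ by $v_j\cos\theta+w\sin\theta$. *)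

theory Defs
  imports "HOL-Analysis.Analysis"
begin

text \<open>Velocities v in R^N are vectors of type (real, 'n) vec with N = CARD('n).
  The index type carries a linear order so that pairs i < j can be enumerated.\<close>

definition pair_rot :: "'n::finite \<Rightarrow> 'n \<Rightarrow> real \<Rightarrow> (real, 'n) vec \<Rightarrow> (real, 'n) vec" where
  "pair_rot i j \<theta> v = (\<chi> k. if k = i then v$i * cos \<theta> + v$j * sin \<theta>
                          else if k = j then - v$i * sin \<theta> + v$j * cos \<theta>
                          else v$k)"

definition thermo_upd :: "'n::finite \<Rightarrow> real \<Rightarrow> real \<Rightarrow> (real, 'n) vec \<Rightarrow> (real, 'n) vec" where
  "thermo_upd j w \<theta> v = (\<chi> k. if k = j then v$j * cos \<theta> + w * sin \<theta> else v$k)"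

definition kac_Q :: "((real, 'n::{finite,linorder}) vec \<Rightarrow> real) \<Rightarrow> (real, 'n) vec \<Rightarrow> real" where
  "kac_Q F v = (1 / real (CARD('n) choose 2)) *
     (\<Sum>(i,j) \<in> {(i,j). i < j}.
        (1 / (2*pi)) * (LINT \<theta>:{0..2*pi}|lborel. F (pair_rot i j \<theta> v)))"

definition kac_R :: "(real \<Rightarrow> real) \<Rightarrow> 'n::finite \<Rightarrow> ((real, 'n) vec \<Rightarrow> real) \<Rightarrow> (real, 'n) vec \<Rightarrow> real" where
  "kac_R g j F v = (LINT w|lborel. (1 / (2*pi)) *
     (LINT \<theta>:{0..2*pi}|lborel. g (w * cos \<theta> - v$j * sin \<theta>) * F (thermo_upd j w \<theta> v)))"

definition kac_gen :: "real \<Rightarrow> real \<Rightarrow> (real \<Rightarrow> real) \<Rightarrow> ((real, 'n::{finite,linorder}) vec \<Rightarrow> real)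
    \<Rightarrow> (real, 'n) vec \<Rightarrow> real" where
  "kac_gen lam mu g F v =
     - lam * real CARD('n) * (F v - kac_Q F v) - mu * (\<Sum>j\<in>UNIV. F v - kac_R g j F v)"

definition wnorm :: "((real, 'n::finite) vec \<Rightarrow> real) \<Rightarrow> real" where
  "wnorm f = (LINT v|lborel. (1 + norm v ^ 2) * \<bar>f v\<bar>)"

definition kac_solution :: "real \<Rightarrow> real \<Rightarrow> (real \<Rightarrow> real)
    \<Rightarrow> (real \<Rightarrow> (real, 'n::{finite,linorder}) vec \<Rightarrow> real) \<Rightarrow> bool" where
  "kac_solution lam mu g F \<longleftrightarrow>
     (\<forall>t\<ge>0.
        (\<forall>v. F t v \<ge> 0) \<and>
        integrable lborel (\<lambda>v. (1 + norm v ^ 2) * F t v) \<and>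
        (LINT v|lborel. F t v) = 1 \<and>
        integrable lborel (\<lambda>v. (1 + norm v ^ 2) * \<bar>kac_gen lam mu g (F t) v\<bar>) \<and>
        ((\<lambda>h. wnorm (\<lambda>v. (F (t + h) v - F t v) / h - kac_gen lam mu g (F t) v))
           \<longlongrightarrow> 0) (at 0 within {h. 0 \<le> t + h}))"

definition kinetic_energy :: "(real \<Rightarrow> (real, 'n::finite) vec \<Rightarrow> real) \<Rightarrow> real \<Rightarrow> real" where
  "kinetic_energy F t = (LINT v|lborel. norm v ^ 2 * F t v)"

end

theory Submission
  imports Defs
begin


definition rot2 :: "real \<Rightarrow> real \<times> real \<Rightarrow> real \<times> real" where
  "rot2 \<theta> p = (fst p * cos \<theta> + snd p * sin \<theta>, - fst p * sin \<theta> + snd p * cos \<theta>)"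

lemma lborel_pair_eq: "(lborel :: (real \<times> real) measure) = lborel \<Otimes>\<^sub>M lborel"
  by (simp add: lborel_prod)

lemma meas_pair': "(f::real\<times>real \<Rightarrow> ennreal) \<in> borel_measurable borel \<Longrightarrow> f \<in> borel_measurable (lborel \<Otimes>\<^sub>M lborel)"
  by (simp add: lborel_prod)

lemma meas_cont_comp:
  assumes "f \<in> borel_measurable borel" "continuous_on UNIV T"
  shows "(\<lambda>x. f (T x)) \<in> borel_measurable borel"
  using measurable_compose[OF borel_measurable_continuous_onI[OF assms(2)] assms(1)] .

lemma shear_x:
  fixes f :: "real \<times> real \<Rightarrow> ennreal"
  assumes [measurable]: "f \<in> borel_measurable borel"
  shows "(\<integral>\<^sup>+p. f (fst p + a * snd p, snd p) \<partial>lborel) = (\<integral>\<^sup>+p. f p \<partial>lborel)"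
proof -
  have "(\<integral>\<^sup>+p. f (fst p + a * snd p, snd p) \<partial>lborel) = (\<integral>\<^sup>+y. \<integral>\<^sup>+x. f (x + a * y, y) \<partial>lborel \<partial>lborel)"
    unfolding lborel_pair_eq by (subst lborel_pair.nn_integral_snd[symmetric]) (simp_all add: meas_pair')
  also have "\<dots> = (\<integral>\<^sup>+y. \<integral>\<^sup>+x. f (x, y) \<partial>lborel \<partial>lborel)"
  proof (rule nn_integral_cong)
    fix y :: real
    have "(\<integral>\<^sup>+x. f (x, y) \<partial>lborel) = ennreal \<bar>1::real\<bar> * (\<integral>\<^sup>+x. f (a*y + 1 * x, y) \<partial>lborel)"
      by (rule nn_integral_real_affine) auto
    then show "(\<integral>\<^sup>+x. f (x + a * y, y) \<partial>lborel) = (\<integral>\<^sup>+x. f (x, y) \<partial>lborel)"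
      by (simp add: add.commute)
  qed
  also have "\<dots> = (\<integral>\<^sup>+p. f p \<partial>lborel)"
    unfolding lborel_pair_eq by (subst lborel_pair.nn_integral_snd[symmetric]) (simp_all add: meas_pair')
  finally show ?thesis .
qed

lemma shear_y:
  fixes f :: "real \<times> real \<Rightarrow> ennreal"
  assumes [measurable]: "f \<in> borel_measurable borel"
  shows "(\<integral>\<^sup>+p. f (fst p, snd p + b * fst p) \<partial>lborel) = (\<integral>\<^sup>+p. f p \<partial>lborel)"
proof -
  have "(\<integral>\<^sup>+p. f (fst p, snd p + b * fst p) \<partial>lborel) = (\<integral>\<^sup>+x. \<integral>\<^sup>+y. f (x, y + b * x) \<partial>lborel \<partial>lborel)"
    unfolding lborel_pair_eq by (subst lborel.nn_integral_fst[symmetric]) (simp_all add: meas_pair')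
  also have "\<dots> = (\<integral>\<^sup>+x. \<integral>\<^sup>+y. f (x, y) \<partial>lborel \<partial>lborel)"
  proof (rule nn_integral_cong)
    fix x :: real
    have "(\<integral>\<^sup>+y. f (x, y) \<partial>lborel) = ennreal \<bar>1::real\<bar> * (\<integral>\<^sup>+y. f (x, b*x + 1 * y) \<partial>lborel)"
      by (rule nn_integral_real_affine) auto
    then show "(\<integral>\<^sup>+y. f (x, y + b * x) \<partial>lborel) = (\<integral>\<^sup>+y. f (x, y) \<partial>lborel)"
      by (simp add: add.commute)
  qed
  also have "\<dots> = (\<integral>\<^sup>+p. f p \<partial>lborel)"
    unfolding lborel_pair_eq by (subst lborel.nn_integral_fst[symmetric]) (simp_all add: meas_pair')
  finally show ?thesis .
qed

lemma neg_inv: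
  fixes f :: "real \<times> real \<Rightarrow> ennreal"
  assumes [measurable]: "f \<in> borel_measurable borel"
  shows "(\<integral>\<^sup>+p. f (- fst p, - snd p) \<partial>lborel) = (\<integral>\<^sup>+p. f p \<partial>lborel)"
proof -
  have "(\<integral>\<^sup>+p. f (- fst p, - snd p) \<partial>lborel) = (\<integral>\<^sup>+x. \<integral>\<^sup>+y. f (-x, -y) \<partial>lborel \<partial>lborel)"
    unfolding lborel_pair_eq by (subst lborel.nn_integral_fst[symmetric]) (simp_all add: meas_pair')
  also have "\<dots> = (\<integral>\<^sup>+x. \<integral>\<^sup>+y. f (x, y) \<partial>lborel \<partial>lborel)"
  proof -
    have *: "\<And>h::real\<Rightarrow>ennreal. h \<in> borel_measurable borel \<Longrightarrow> (\<integral>\<^sup>+y. h (-y) \<partial>lborel) = (\<integral>\<^sup>+y. h y \<partial>lborel)"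
    proof -
      fix h :: "real\<Rightarrow>ennreal" assume [measurable]: "h \<in> borel_measurable borel"
      have "(\<integral>\<^sup>+y. h y \<partial>lborel) = ennreal \<bar>-1::real\<bar> * (\<integral>\<^sup>+y. h (0 + -1 * y) \<partial>lborel)"
        by (rule nn_integral_real_affine) auto
      then show "(\<integral>\<^sup>+y. h (-y) \<partial>lborel) = (\<integral>\<^sup>+y. h y \<partial>lborel)" by simp
    qed
    have "(\<integral>\<^sup>+x. \<integral>\<^sup>+y. f (-x, -y) \<partial>lborel \<partial>lborel) = (\<integral>\<^sup>+x. \<integral>\<^sup>+y. f (-x, y) \<partial>lborel \<partial>lborel)"
      by (intro nn_integral_cong *) measurable
    also have "\<dots> = (\<integral>\<^sup>+x. \<integral>\<^sup>+y. f (x, y) \<partial>lborel \<partial>lborel)"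
      by (rule *) measurable
    finally show ?thesis .
  qed
  also have "\<dots> = (\<integral>\<^sup>+p. f p \<partial>lborel)"
    unfolding lborel_pair_eq by (subst lborel.nn_integral_fst[symmetric]) (simp_all add: meas_pair')
  finally show ?thesis .
qed

lemma rot2_inv:
  fixes f :: "real \<times> real \<Rightarrow> ennreal"
  assumes [measurable]: "f \<in> borel_measurable borel"
  shows "(\<integral>\<^sup>+p. f (rot2 \<theta> p) \<partial>lborel) = (\<integral>\<^sup>+p. f p \<partial>lborel)"
proof (cases "cos \<theta> = -1")
  case True
  then have "sin \<theta> = 0" using sin_cos_squared_add[of \<theta>] by (simp add: power2_eq_square)
  then have "rot2 \<theta> p = (- fst p, - snd p)" for p using True by (simp add: rot2_def)
  then show ?thesis using neg_inv[OF assms] by simp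
next
  case False
  define c where "c = cos \<theta>"
  define s where "s = sin \<theta>"
  have c1: "1 + c \<noteq> 0" using False by (auto simp: c_def)
  have sc: "s^2 = (1 - c) * (1 + c)" using sin_cos_squared_add[of \<theta>] by (simp add: c_def s_def algebra_simps power2_eq_square)
  define a where "a = s / (1 + c)"
  define b where "b = - s"
  have ab: "a * b = c - 1"
    using c1 sc by (simp add: a_def b_def field_simps power2_eq_square)
  have a2: "a * (1 + c) = s" using c1 by (simp add: a_def)
  let ?Sx = "\<lambda>p::real\<times>real. (fst p + a * snd p, snd p)"
  let ?Sy = "\<lambda>p::real\<times>real. (fst p, snd p + b * fst p)"
  have eq: "rot2 \<theta> p = ?Sx (?Sy (?Sx p))" for p
  proof -
    have "fst p + a * snd p + a * (snd p + b * (fst p + a * snd p)) = fst p * (1 + a*b) + snd p * (a * (2 + a * b))"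
      by (simp add: algebra_simps)
    also have "\<dots> = fst p * c + snd p * s"
    proof -
      have "a * (2 + a * b) = a * (1 + (1 + a * b))" by simp
      also have "\<dots> = s" using ab a2 by simp
      finally have "a * (2 + a * b) = s" .
      then show ?thesis using ab by simp
    qed
    finally have 1: "fst p + a * snd p + a * (snd p + b * (fst p + a * snd p)) = fst p * c + snd p * s" .
    have 2: "snd p + b * (fst p + a * snd p) = - fst p * s + snd p * c"
    proof -
      have "snd p + b * (fst p + a * snd p) = b * fst p + (1 + a*b) * snd p" by (simp add: algebra_simps)
      then show ?thesis using ab by (simp add: b_def)
    qed
    show ?thesis using 1 2 by (simp add: rot2_def c_def s_def)
  qed
  have m1: "(\<lambda>q. f (?Sx (?Sy q))) \<in> borel_measurable borel"
    by (rule meas_cont_comp[OF assms]) (intro continuous_intros)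
  have m2: "(\<lambda>q. f (?Sx q)) \<in> borel_measurable borel"
    by (rule meas_cont_comp[OF assms]) (intro continuous_intros)
  have 1: "(\<integral>\<^sup>+p. f (?Sx (?Sy (?Sx p))) \<partial>lborel) = (\<integral>\<^sup>+p. f (?Sx (?Sy p)) \<partial>lborel)"
    using shear_x[OF m1, of a] by simp
  have 2: "(\<integral>\<^sup>+p. f (?Sx (?Sy p)) \<partial>lborel) = (\<integral>\<^sup>+p. f (?Sx p) \<partial>lborel)"
    using shear_y[OF m2, of b] by simp
  have 3: "(\<integral>\<^sup>+p. f (?Sx p) \<partial>lborel) = (\<integral>\<^sup>+p. f p \<partial>lborel)"
    using shear_x[OF assms, of a] by simp
  show ?thesis unfolding eq using 1 2 3 by simp
qed


lemma meas_vec_lambda[measurable]: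
  "(\<lambda>x. \<chi> k. x k) \<in> Pi\<^sub>M UNIV (\<lambda>_::'n::finite. lborel) \<rightarrow>\<^sub>M (borel :: (real,'n) vec measure)"
proof -
  have "\<forall>i\<in>Basis. (\<lambda>x. (\<chi> k. x k) \<bullet> i) \<in> borel_measurable (Pi\<^sub>M UNIV (\<lambda>_::'n::finite. lborel :: real measure))"
  proof
    fix i :: "(real,'n) vec" assume "i \<in> Basis"
    then obtain j where j: "i = axis j 1" by (auto simp: Basis_vec_def)
    show "(\<lambda>x. (\<chi> k. x k) \<bullet> i) \<in> borel_measurable (Pi\<^sub>M UNIV (\<lambda>_::'n::finite. lborel :: real measure))"
      unfolding j by (simp add: inner_axis)
  qed
  then show ?thesis by (subst borel_measurable_euclidean_space) auto
qed

lemma prod_Basis_vec: "(\<Prod>b\<in>(Basis :: (real,'n::finite) vec set). f b) = (\<Prod>k\<in>UNIV. f (axis k 1))"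
proof -
  have "(Basis :: (real,'n::finite) vec set) = (\<lambda>k. axis k 1) ` UNIV" by (auto simp: Basis_vec_def)
  moreover have "inj (\<lambda>k::'n. axis k (1::real))" by (auto intro!: injI simp: axis_eq_axis)
  ultimately show ?thesis by (metis prod.reindex_cong)
qed

lemma lborel_vec:
  "(lborel :: (real,'n::finite) vec measure) = distr (Pi\<^sub>M UNIV (\<lambda>_. lborel)) borel (\<lambda>x. \<chi> k. x k)"
proof (rule lborel_eqI)
  interpret P: product_sigma_finite "\<lambda>_::'n. lborel :: real measure"
    by (simp add: product_sigma_finite_def sigma_finite_lborel)
  fix l u :: "(real,'n) vec"
  assume le: "\<And>b. b \<in> Basis \<Longrightarrow> l \<bullet> b \<le> u \<bullet> b"
  have le': "l $ k \<le> u $ k" for k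
  proof -
    have "axis k 1 \<in> (Basis :: (real,'n) vec set)" by (auto simp: Basis_vec_def)
    from le[OF this] show ?thesis by (simp add: inner_axis)
  qed
  have "(\<lambda>x. \<chi> k. x k) -` box l u \<inter> space (Pi\<^sub>M UNIV (\<lambda>_. lborel)) = (\<Pi>\<^sub>E k\<in>UNIV. {l$k<..<u$k})"
    by (auto simp: space_PiM mem_box_cart PiE_def Pi_def)
  then have "emeasure (distr (Pi\<^sub>M UNIV (\<lambda>_. lborel)) borel (\<lambda>x. \<chi> k. x k)) (box l u)
      = emeasure (Pi\<^sub>M UNIV (\<lambda>_. lborel)) (\<Pi>\<^sub>E k\<in>UNIV. {l$k<..<u$k})"
    by (simp add: emeasure_distr)
  also have "\<dots> = (\<Prod>k\<in>UNIV. emeasure lborel {l$k<..<u$k})"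
    by (rule P.emeasure_PiM) auto
  also have "\<dots> = (\<Prod>k\<in>UNIV. ennreal (u$k - l$k))"
    using le' by (simp add: emeasure_lborel_Ioo)
  also have "\<dots> = ennreal (\<Prod>k\<in>UNIV. u$k - l$k)"
    using le' by (simp add: prod_ennreal)
  also have "\<dots> = ennreal (\<Prod>b\<in>Basis. (u - l) \<bullet> b)"
    by (simp add: prod_Basis_vec inner_axis)
  finally show "emeasure (distr (Pi\<^sub>M UNIV (\<lambda>_. lborel)) borel (\<lambda>x. \<chi> k. x k)) (box l u) = (\<Prod>b\<in>Basis. (u - l) \<bullet> b)"
    by (simp add: prod_ennreal[symmetric] prod_nonneg)
qed simp


lemma nn_vec_PiM:
  fixes f :: "(real,'n::finite) vec \<Rightarrow> ennreal"
  assumes [measurable]: "f \<in> borel_measurable borel"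
  shows "(\<integral>\<^sup>+v. f v \<partial>lborel) = (\<integral>\<^sup>+x. f (\<chi> k. x k) \<partial>Pi\<^sub>M UNIV (\<lambda>_. lborel))"
  by (subst lborel_vec) (simp add: nn_integral_distr)

lemma PiM_split:
  fixes G :: "('n::finite \<Rightarrow> real) \<Rightarrow> ennreal"
  assumes "j \<in> I" and [measurable]: "G \<in> borel_measurable (Pi\<^sub>M I (\<lambda>_. lborel))"
  shows "(\<integral>\<^sup>+x. G x \<partial>Pi\<^sub>M I (\<lambda>_. lborel)) = (\<integral>\<^sup>+x. \<integral>\<^sup>+y. G (x(j:=y)) \<partial>lborel \<partial>Pi\<^sub>M (I - {j}) (\<lambda>_. lborel))"
proof -
  interpret P: product_sigma_finite "\<lambda>_::'n. lborel :: real measure"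
    by (simp add: product_sigma_finite_def sigma_finite_lborel)
  have I: "I = insert j (I - {j})" using assms(1) by auto
  have "G \<in> borel_measurable (Pi\<^sub>M (insert j (I - {j})) (\<lambda>_. lborel))" using I assms(2) by simp
  from P.product_nn_integral_insert[OF _ _ this] show ?thesis using I by simp
qed

definition upd :: "'n::finite \<Rightarrow> real \<Rightarrow> (real,'n) vec \<Rightarrow> (real,'n) vec" where
  "upd j a v = (\<chi> k. if k = j then a else v$k)"

lemma upd_Phi: "upd j a (\<chi> k. x k) = (\<chi> k. (x(j:=a)) k)"
  by (simp add: upd_def vec_eq_iff)

lemma upd_nth: "upd j a v $ j = a" "k \<noteq> j \<Longrightarrow> upd j a v $ k = v $ k"
  by (simp_all add: upd_def)

lemma meas_nth[measurable]: "(\<lambda>v::(real,'n::finite) vec. v $ k) \<in> borel_measurable borel"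
  by (intro borel_measurable_continuous_onI continuous_intros)

lemma meas_upd[measurable]:
  fixes j :: "'n::finite"
  assumes [measurable]: "a \<in> borel_measurable M" "v \<in> borel_measurable M"
  shows "(\<lambda>x. upd j (a x) (v x)) \<in> borel_measurable M"
proof -
  have "\<forall>i\<in>Basis. (\<lambda>x. upd j (a x) (v x) \<bullet> i) \<in> borel_measurable M"
  proof
    fix i :: "(real,'n) vec" assume "i \<in> Basis"
    then obtain k where k: "i = axis k 1" by (auto simp: Basis_vec_def)
    have "(\<lambda>x. upd j (a x) (v x) \<bullet> i) = (\<lambda>x. if k = j then a x else v x $ k)"
      by (simp add: k inner_axis upd_def)
    also have "\<dots> \<in> borel_measurable M" by measurable
    finally show "(\<lambda>x. upd j (a x) (v x) \<bullet> i) \<in> borel_measurable M" .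
  qed
  then show ?thesis by (subst borel_measurable_euclidean_space) auto
qed


lemma upd_upd[simp]: "upd j a (upd j b v) = upd j a v"
  by (simp add: upd_def vec_eq_iff)

lemma upd_same[simp]: "upd j a v $ j = a"
  by (simp add: upd_def)

lemma Phi_upd: "(\<chi> k. (x(j:=a)) k) = upd j a (\<chi> k. x k)"
  by (simp add: upd_def vec_eq_iff)

lemma meas_lborel_pair_iff:
  fixes f :: "'a::euclidean_space \<times> 'b::euclidean_space \<Rightarrow> 'c::topological_space"
  shows "f \<in> borel_measurable (lborel \<Otimes>\<^sub>M lborel) \<longleftrightarrow> f \<in> borel_measurable (borel \<Otimes>\<^sub>M borel)"
proof -
  have "sets (lborel \<Otimes>\<^sub>M lborel) = sets ((borel::'a::euclidean_space measure) \<Otimes>\<^sub>M (borel::'b::euclidean_space measure))"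
    by (intro sets_pair_measure_cong) simp_all
  from measurable_cong_sets[OF this refl, of "borel :: 'c measure"] show ?thesis by simp
qed

lemma rot2_meas[measurable]: "rot2 \<theta> \<in> (borel \<Otimes>\<^sub>M borel) \<rightarrow>\<^sub>M (borel \<Otimes>\<^sub>M borel)"
  unfolding rot2_def by measurable

lemma rot2_meas'[measurable]: "rot2 \<theta> \<in> (lborel \<Otimes>\<^sub>M lborel) \<rightarrow>\<^sub>M (lborel \<Otimes>\<^sub>M lborel)"
  unfolding rot2_def by measurable

lemma inv_thermo:
  fixes h :: "(real,'n::finite) vec \<Rightarrow> real \<Rightarrow> ennreal"
  assumes hm: "case_prod h \<in> borel_measurable (borel \<Otimes>\<^sub>M borel)"
  shows "(\<integral>\<^sup>+v. \<integral>\<^sup>+w. h (upd j (fst (rot2 \<theta> (v$j,w))) v) (snd (rot2 \<theta> (v$j,w))) \<partial>lborel \<partial>lborel)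
       = (\<integral>\<^sup>+v. \<integral>\<^sup>+w. h v w \<partial>lborel \<partial>lborel)"
proof -
  have hm' [measurable]: "case_prod h \<in> borel_measurable (lborel \<Otimes>\<^sub>M lborel)"
    using hm meas_lborel_pair_iff by blast
  have [measurable]: "rot2 \<theta> \<in> borel_measurable borel"
    unfolding rot2_def by (intro borel_measurable_continuous_onI continuous_intros)
  define G where "G v = (\<integral>\<^sup>+w. h (upd j (fst (rot2 \<theta> (v$j,w))) v) (snd (rot2 \<theta> (v$j,w))) \<partial>lborel)" for v
  define G0 where "G0 v = (\<integral>\<^sup>+w. h v w \<partial>lborel)" for v
  have Gm[measurable]: "G \<in> borel_measurable borel"
    unfolding G_def rot2_def by measurable
  have G0m[measurable]: "G0 \<in> borel_measurable borel"
    unfolding G0_def by measurable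
  have key: "(\<integral>\<^sup>+y. G (upd j y u) \<partial>lborel) = (\<integral>\<^sup>+y. G0 (upd j y u) \<partial>lborel)" for u :: "(real,'n) vec"
  proof -
    define H where "H p = h (upd j (fst p) u) (snd p)" for p
    have Hm: "H \<in> borel_measurable borel"
    proof -
      have "H \<in> borel_measurable (lborel \<Otimes>\<^sub>M lborel)"
        unfolding H_def by measurable
      then show ?thesis by (simp add: lborel_prod)
    qed
    have Hm'[measurable]: "H \<in> borel_measurable (lborel \<Otimes>\<^sub>M lborel)" using Hm by (simp add: lborel_prod)
    have "(\<integral>\<^sup>+y. G (upd j y u) \<partial>lborel) = (\<integral>\<^sup>+y. \<integral>\<^sup>+w. H (rot2 \<theta> (y, w)) \<partial>lborel \<partial>lborel)"
      by (simp add: G_def H_def)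
    also have "\<dots> = (\<integral>\<^sup>+p. H (rot2 \<theta> p) \<partial>(lborel \<Otimes>\<^sub>M lborel))"
      by (rule lborel.nn_integral_fst) measurable
    also have "\<dots> = (\<integral>\<^sup>+p. H p \<partial>(lborel \<Otimes>\<^sub>M lborel))"
      using rot2_inv[OF Hm, of \<theta>] by (simp add: lborel_prod)
    also have "\<dots> = (\<integral>\<^sup>+y. \<integral>\<^sup>+w. H (y, w) \<partial>lborel \<partial>lborel)"
      by (rule lborel.nn_integral_fst[symmetric]) measurable
    also have "\<dots> = (\<integral>\<^sup>+y. G0 (upd j y u) \<partial>lborel)"
      by (simp add: G0_def H_def)
    finally show ?thesis .
  qed
  have "(\<integral>\<^sup>+v. G v \<partial>lborel) = (\<integral>\<^sup>+x. G (\<chi> k. x k) \<partial>Pi\<^sub>M UNIV (\<lambda>_. lborel))"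
    by (rule nn_vec_PiM) measurable
  also have "\<dots> = (\<integral>\<^sup>+x. \<integral>\<^sup>+y. G (\<chi> k. (x(j:=y)) k) \<partial>lborel \<partial>Pi\<^sub>M (UNIV - {j}) (\<lambda>_. lborel))"
    by (rule PiM_split) measurable
  also have "\<dots> = (\<integral>\<^sup>+x. \<integral>\<^sup>+y. G0 (\<chi> k. (x(j:=y)) k) \<partial>lborel \<partial>Pi\<^sub>M (UNIV - {j}) (\<lambda>_. lborel))"
    unfolding Phi_upd by (simp add: key)
  also have "\<dots> = (\<integral>\<^sup>+x. G0 (\<chi> k. x k) \<partial>Pi\<^sub>M UNIV (\<lambda>_. lborel))"
    by (rule PiM_split[symmetric]) measurable
  also have "\<dots> = (\<integral>\<^sup>+v. G0 v \<partial>lborel)"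
    by (rule nn_vec_PiM[symmetric]) measurable
  finally show ?thesis by (simp add: G_def G0_def)
qed

lemma meas_vec_lambda_gen[measurable]:
  "(\<lambda>x. \<chi> k. x k) \<in> Pi\<^sub>M I (\<lambda>_::'n::finite. lborel) \<rightarrow>\<^sub>M (borel :: (real,'n) vec measure)"
proof -
  have "\<forall>i\<in>Basis. (\<lambda>x. (\<chi> k. x k) \<bullet> i) \<in> borel_measurable (Pi\<^sub>M I (\<lambda>_::'n::finite. lborel :: real measure))"
  proof
    fix i :: "(real,'n) vec" assume "i \<in> Basis"
    then obtain j where j: "i = axis j 1" by (auto simp: Basis_vec_def)
    show "(\<lambda>x. (\<chi> k. x k) \<bullet> i) \<in> borel_measurable (Pi\<^sub>M I (\<lambda>_::'n::finite. lborel :: real measure))"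
    proof (cases "j \<in> I")
      case True
      then show ?thesis unfolding j by (simp add: inner_axis)
    next
      case False
      have "(\<lambda>x. (\<chi> k. x k) \<bullet> i) \<in> borel_measurable (Pi\<^sub>M I (\<lambda>_::'n::finite. lborel :: real measure))
         \<longleftrightarrow> (\<lambda>x. undefined :: real) \<in> borel_measurable (Pi\<^sub>M I (\<lambda>_::'n::finite. lborel :: real measure))"
        apply (rule measurable_cong)
        using False by (auto simp: j inner_axis space_PiM PiE_def extensional_def)
      then show ?thesis by simp
    qed
  qed
  then show ?thesis by (subst borel_measurable_euclidean_space) auto
qed

lemma pair_rot_upd:
  assumes "i \<noteq> j"
  shows "pair_rot i j \<theta> v = upd i (fst (rot2 \<theta> (v$i, v$j))) (upd j (snd (rot2 \<theta> (v$i, v$j))) v)"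
  using assms by (simp add: pair_rot_def upd_def rot2_def vec_eq_iff)

lemma upd_comm: "i \<noteq> j \<Longrightarrow> upd i a (upd j b v) = upd j b (upd i a v)"
  by (auto simp: upd_def vec_eq_iff)

lemma inv_pair:
  fixes f :: "(real,'n::finite) vec \<Rightarrow> ennreal"
  assumes ij: "i \<noteq> j" and [measurable]: "f \<in> borel_measurable borel"
  shows "(\<integral>\<^sup>+v. f (pair_rot i j \<theta> v) \<partial>lborel) = (\<integral>\<^sup>+v. f v \<partial>lborel)"
proof -
  have [measurable]: "rot2 \<theta> \<in> borel_measurable borel"
    unfolding rot2_def by (intro borel_measurable_continuous_onI continuous_intros)
  define G where "G v = f (pair_rot i j \<theta> v)" for v
  have Gm[measurable]: "G \<in> borel_measurable borel"
    unfolding G_def pair_rot_upd[OF ij] rot2_def by measurable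
  have ji: "j \<in> UNIV - {i}" using ij by auto
  have key: "\<And>G :: (real,'n) vec \<Rightarrow> ennreal. G \<in> borel_measurable borel \<Longrightarrow>
     (\<integral>\<^sup>+v. G v \<partial>lborel) = (\<integral>\<^sup>+z. \<integral>\<^sup>+b. \<integral>\<^sup>+a. G (upd i a (upd j b (\<chi> k. z k))) \<partial>lborel \<partial>lborel \<partial>Pi\<^sub>M (UNIV - {i} - {j}) (\<lambda>_. lborel))"
  proof -
    fix G :: "(real,'n) vec \<Rightarrow> ennreal" assume [measurable]: "G \<in> borel_measurable borel"
    have "(\<integral>\<^sup>+v. G v \<partial>lborel) = (\<integral>\<^sup>+x. G (\<chi> k. x k) \<partial>Pi\<^sub>M UNIV (\<lambda>_. lborel))"
      by (rule nn_vec_PiM) measurable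
    also have "\<dots> = (\<integral>\<^sup>+x. \<integral>\<^sup>+a. G (\<chi> k. (x(i:=a)) k) \<partial>lborel \<partial>Pi\<^sub>M (UNIV - {i}) (\<lambda>_. lborel))"
      by (rule PiM_split) measurable
    also have "\<dots> = (\<integral>\<^sup>+x. \<integral>\<^sup>+a. G (upd i a (\<chi> k. x k)) \<partial>lborel \<partial>Pi\<^sub>M (UNIV - {i}) (\<lambda>_. lborel))"
      unfolding Phi_upd ..
    also have "\<dots> = (\<integral>\<^sup>+z. \<integral>\<^sup>+b. \<integral>\<^sup>+a. G (upd i a (\<chi> k. (z(j:=b)) k)) \<partial>lborel \<partial>lborel \<partial>Pi\<^sub>M (UNIV - {i} - {j}) (\<lambda>_. lborel))"
      by (rule PiM_split[OF ji]) measurable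
    also have "\<dots> = (\<integral>\<^sup>+z. \<integral>\<^sup>+b. \<integral>\<^sup>+a. G (upd i a (upd j b (\<chi> k. z k))) \<partial>lborel \<partial>lborel \<partial>Pi\<^sub>M (UNIV - {i} - {j}) (\<lambda>_. lborel))"
      unfolding Phi_upd ..
    finally show "(\<integral>\<^sup>+v. G v \<partial>lborel) = (\<integral>\<^sup>+z. \<integral>\<^sup>+b. \<integral>\<^sup>+a. G (upd i a (upd j b (\<chi> k. z k))) \<partial>lborel \<partial>lborel \<partial>Pi\<^sub>M (UNIV - {i} - {j}) (\<lambda>_. lborel))" .
  qed
  have inner: "(\<integral>\<^sup>+b. \<integral>\<^sup>+a. G (upd i a (upd j b u)) \<partial>lborel \<partial>lborel) = (\<integral>\<^sup>+b. \<integral>\<^sup>+a. f (upd i a (upd j b u)) \<partial>lborel \<partial>lborel)" for u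
  proof -
    define H where "H p = f (upd i (fst p) (upd j (snd p) u))" for p
    have Hm'[measurable]: "H \<in> borel_measurable (lborel \<Otimes>\<^sub>M lborel)"
      unfolding H_def by measurable
    have Hm: "H \<in> borel_measurable borel" using Hm' by (simp add: lborel_prod)
    have Gi: "G (upd i a (upd j b u)) = H (rot2 \<theta> (a, b))" for a b
    proof -
      have 1: "upd i a (upd j b u) $ i = a" by simp
      have 2: "upd i a (upd j b u) $ j = b" using ij by (simp add: upd_def)
      show ?thesis unfolding G_def pair_rot_upd[OF ij] 1 2 H_def
        using ij by (simp add: upd_comm)
    qed
    have "(\<integral>\<^sup>+b. \<integral>\<^sup>+a. G (upd i a (upd j b u)) \<partial>lborel \<partial>lborel) = (\<integral>\<^sup>+b. \<integral>\<^sup>+a. H (rot2 \<theta> (a, b)) \<partial>lborel \<partial>lborel)"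
      by (simp add: Gi)
    also have "\<dots> = (\<integral>\<^sup>+p. H (rot2 \<theta> p) \<partial>(lborel \<Otimes>\<^sub>M lborel))"
      by (rule lborel_pair.nn_integral_snd) measurable
    also have "\<dots> = (\<integral>\<^sup>+p. H p \<partial>(lborel \<Otimes>\<^sub>M lborel))"
      using rot2_inv[OF Hm, of \<theta>] by (simp add: lborel_prod)
    also have "\<dots> = (\<integral>\<^sup>+b. \<integral>\<^sup>+a. H (a, b) \<partial>lborel \<partial>lborel)"
      by (rule lborel_pair.nn_integral_snd[symmetric]) measurable
    also have "\<dots> = (\<integral>\<^sup>+b. \<integral>\<^sup>+a. f (upd i a (upd j b u)) \<partial>lborel \<partial>lborel)"
      by (simp add: H_def)
    finally show ?thesis .
  qed
  have "(\<integral>\<^sup>+v. f (pair_rot i j \<theta> v) \<partial>lborel) = (\<integral>\<^sup>+v. G v \<partial>lborel)" by (simp add: G_def)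
  also have "\<dots> = (\<integral>\<^sup>+z. \<integral>\<^sup>+b. \<integral>\<^sup>+a. G (upd i a (upd j b (\<chi> k. z k))) \<partial>lborel \<partial>lborel \<partial>Pi\<^sub>M (UNIV - {i} - {j}) (\<lambda>_. lborel))"
    by (rule key[OF Gm])
  also have "\<dots> = (\<integral>\<^sup>+z. \<integral>\<^sup>+b. \<integral>\<^sup>+a. f (upd i a (upd j b (\<chi> k. z k))) \<partial>lborel \<partial>lborel \<partial>Pi\<^sub>M (UNIV - {i} - {j}) (\<lambda>_. lborel))"
    by (simp add: inner)
  also have "\<dots> = (\<integral>\<^sup>+v. f v \<partial>lborel)"
    by (rule key[OF assms(2), symmetric])
  finally show ?thesis .
qed


lemma alg1:
  fixes sn cs A x y :: real
  assumes h: "sn * sn + cs * cs = 1"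
  shows "A + x^2 * (1/2 + (cs * cs - sn * sn)/2) + y^2 * (1/2 - (cs * cs - sn * sn)/2) - x * y * (2 * sn * cs) = A + (x * cs - y * sn)^2"
proof -
  have e: "cs * cs = 1 - sn * sn" using h by linarith
  have 1: "1/2 + (cs * cs - sn * sn)/2 = cs * cs" unfolding e by (simp add: field_simps)
  have 2: "1/2 - (cs * cs - sn * sn)/2 = sn * sn" unfolding e by (simp add: field_simps)
  show ?thesis unfolding 1 2 by (simp add: power2_eq_square algebra_simps)
qed

lemma alg2:
  fixes sn cs a b :: real
  assumes h: "sn * sn + cs * cs = 1"
  shows "(a * cs + b * sn)^2 + (- a * sn + b * cs)^2 = a^2 + b^2"
proof -
  have "(a * cs + b * sn)^2 + (- a * sn + b * cs)^2 = a^2 * (sn * sn + cs * cs) + b^2 * (sn * sn + cs * cs)"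
    by (simp add: power2_eq_square algebra_simps)
  then show ?thesis unfolding h by simp
qed

lemma theta_has_integral:
  "((\<lambda>\<theta>. A + (x * cos \<theta> - y * sin \<theta>)^2) has_integral (2*pi*A + pi*x^2 + pi*y^2)) {0..2*pi}"
proof -
  define P where "P \<theta> = A * \<theta> + x^2 * (\<theta>/2 + sin \<theta> * cos \<theta> / 2) + y^2 * (\<theta>/2 - sin \<theta> * cos \<theta> / 2) - x * y * (sin \<theta>)^2" for \<theta>
  have d: "(P has_real_derivative (A + (x * cos \<theta> - y * sin \<theta>)^2)) (at \<theta>)" for \<theta>
  proof -
    have "(P has_real_derivative (A + x^2 * (1/2 + (cos \<theta> * cos \<theta> - sin \<theta> * sin \<theta>)/2) + y^2 * (1/2 - (cos \<theta> * cos \<theta> - sin \<theta> * sin \<theta>)/2) - x * y * (2 * sin \<theta> * cos \<theta>))) (at \<theta>)"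
      unfolding P_def
      by (rule derivative_eq_intros refl | simp)+ (simp add: algebra_simps power2_eq_square field_simps)
    moreover have "A + x^2 * (1/2 + (cos \<theta> * cos \<theta> - sin \<theta> * sin \<theta>)/2) + y^2 * (1/2 - (cos \<theta> * cos \<theta> - sin \<theta> * sin \<theta>)/2) - x * y * (2 * sin \<theta> * cos \<theta>)
        = A + (x * cos \<theta> - y * sin \<theta>)^2"
      using alg1[of "sin \<theta>" "cos \<theta>" A x y] sin_cos_squared_add[of \<theta>] by (simp add: power2_eq_square)
    ultimately show ?thesis by simp
  qed
  have "((\<lambda>\<theta>. A + (x * cos \<theta> - y * sin \<theta>)^2) has_integral (P (2*pi) - P 0)) {0..2*pi}"
    by (rule fundamental_theorem_of_calculus) (auto intro!: DERIV_subset[OF d] simp: has_real_derivative_iff_has_vector_derivative[symmetric])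
  moreover have "P (2*pi) - P 0 = 2*pi*A + pi*x^2 + pi*y^2"
    by (simp add: P_def algebra_simps)
  ultimately show ?thesis by simp
qed

lemma theta_nn:
  "(\<integral>\<^sup>+\<theta>. ennreal (A + (x * cos \<theta> - y * sin \<theta>)^2) * indicator {0..2*pi} \<theta> \<partial>lborel) = ennreal (2*pi*A + pi*x^2 + pi*y^2)"
  if "A \<ge> 0"
  by (rule nn_integral_has_integral_lebesgue'[OF _ theta_has_integral]) (use that in auto)

lemma theta_const: "(\<integral>\<^sup>+\<theta>. indicator {0..2*pi} \<theta> \<partial>lborel) = ennreal (2*pi)"
  by simp

lemma norm2_vec: "norm (v::(real,'n::finite) vec) ^ 2 = (\<Sum>k\<in>UNIV. (v$k)^2)"
  by (simp only: power2_norm_eq_inner inner_vec_def) (simp add: power2_eq_square)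

lemma norm_pair_rot:
  fixes v :: "(real,'n::finite) vec"
  assumes "i \<noteq> j" shows "norm (pair_rot i j \<theta> v) = norm v"
proof -
  let ?w = "pair_rot i j \<theta> v"
  have s: "sin \<theta> * sin \<theta> + cos \<theta> * cos \<theta> = 1" using sin_cos_squared_add[of \<theta>] by (simp add: power2_eq_square)
  have split: "(\<Sum>k\<in>UNIV. (u$k)^2) = (u$i)^2 + (u$j)^2 + (\<Sum>k\<in>UNIV-{i,j}. (u$k)^2)" for u :: "(real,'n) vec"
  proof -
    have "(\<Sum>k\<in>UNIV. (u$k)^2) = (u$i)^2 + (\<Sum>k\<in>UNIV-{i}. (u$k)^2)"
      by (subst sum.remove[of _ i]) auto
    also have "(\<Sum>k\<in>UNIV-{i}. (u$k)^2) = (u$j)^2 + (\<Sum>k\<in>UNIV-{i}-{j}. (u$k)^2)"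
      using assms by (subst sum.remove[of _ j]) auto
    finally show ?thesis by (simp add: Diff_insert2[symmetric] insert_commute)
  qed
  have rest: "(\<Sum>k\<in>UNIV-{i,j}. (?w$k)^2) = (\<Sum>k\<in>UNIV-{i,j}. (v$k)^2)"
    by (rule sum.cong) (auto simp: pair_rot_def)
  have ij: "(?w$i)^2 + (?w$j)^2 = (v$i)^2 + (v$j)^2"
  proof -
    have "(?w$i)^2 + (?w$j)^2 = (v$i * cos \<theta> + v$j * sin \<theta>)^2 + (- v$i * sin \<theta> + v$j * cos \<theta>)^2"
      using assms by (simp add: pair_rot_def)
    also have "\<dots> = (v$i)^2 + (v$j)^2"
      by (rule alg2[OF s])
    finally show ?thesis .
  qed
  have "norm ?w ^ 2 = norm v ^ 2" unfolding norm2_vec split[of ?w] split[of v] rest ij ..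
  then show ?thesis by (simp add: power2_eq_iff_nonneg)
qed


lemma meas_pair_rot[measurable]:
  fixes i j :: "'n::finite"
  assumes [measurable]: "t \<in> borel_measurable M" "v \<in> borel_measurable M"
  shows "(\<lambda>x. pair_rot i j (t x) (v x)) \<in> borel_measurable M"
proof -
  have "\<forall>b\<in>Basis. (\<lambda>x. pair_rot i j (t x) (v x) \<bullet> b) \<in> borel_measurable M"
  proof
    fix b :: "(real,'n) vec" assume "b \<in> Basis"
    then obtain k where k: "b = axis k 1" by (auto simp: Basis_vec_def)
    have "(\<lambda>x. pair_rot i j (t x) (v x) \<bullet> b) = (\<lambda>x. if k = i then v x $ i * cos (t x) + v x $ j * sin (t x)
                          else if k = j then - v x $ i * sin (t x) + v x $ j * cos (t x) else v x $ k)"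
      by (simp add: k inner_axis pair_rot_def)
    also have "\<dots> \<in> borel_measurable M" by measurable
    finally show "(\<lambda>x. pair_rot i j (t x) (v x) \<bullet> b) \<in> borel_measurable M" .
  qed
  then show ?thesis by (subst borel_measurable_euclidean_space) auto
qed

lemma Q_part:
  fixes F :: "(real,'n::finite) vec \<Rightarrow> real"
  assumes ij: "i \<noteq> j" and Fm[measurable]: "F \<in> borel_measurable borel" and F0: "\<And>v. 0 \<le> F v"
  shows "(\<integral>\<^sup>+v. ennreal (norm v^2) * (\<integral>\<^sup>+\<theta>. ennreal (F (pair_rot i j \<theta> v)) * indicator {0..2*pi} \<theta> \<partial>lborel) \<partial>lborel)
       = ennreal (2*pi) * (\<integral>\<^sup>+v. ennreal (norm v^2 * F v) \<partial>lborel)"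
proof -
  have pm[measurable]: "(\<lambda>p. pair_rot i j (snd p) (fst p)) \<in> borel_measurable ((lborel::(real,'n) vec measure) \<Otimes>\<^sub>M (lborel::real measure))"
    unfolding pair_rot_upd[OF ij] rot2_def by measurable
  have m: "(\<lambda>(v,\<theta>). ennreal (norm v^2 * F (pair_rot i j \<theta> v)) * indicator {0..2*pi} \<theta>) \<in> borel_measurable ((lborel::(real,'n) vec measure) \<Otimes>\<^sub>M (lborel::real measure))"
    using pm by (simp add: split_beta') measurable
  have "(\<integral>\<^sup>+v. ennreal (norm v^2) * (\<integral>\<^sup>+\<theta>. ennreal (F (pair_rot i j \<theta> v)) * indicator {0..2*pi} \<theta> \<partial>lborel) \<partial>lborel)
      = (\<integral>\<^sup>+v. \<integral>\<^sup>+\<theta>. ennreal (norm v^2 * F (pair_rot i j \<theta> v)) * indicator {0..2*pi} \<theta> \<partial>lborel \<partial>lborel)"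
    by (subst nn_integral_cmult[symmetric]) (auto simp: ennreal_mult F0 mult.assoc)
  also have "\<dots> = (\<integral>\<^sup>+\<theta>. \<integral>\<^sup>+v. ennreal (norm v^2 * F (pair_rot i j \<theta> v)) * indicator {0..2*pi} \<theta> \<partial>lborel \<partial>lborel)"
    by (rule lborel_pair.Fubini'[symmetric]) (rule m)
  also have "\<dots> = (\<integral>\<^sup>+\<theta>. (\<integral>\<^sup>+v. ennreal (norm (pair_rot i j \<theta> v)^2 * F (pair_rot i j \<theta> v)) \<partial>lborel) * indicator {0..2*pi} \<theta> \<partial>lborel)"
    by (subst nn_integral_multc) (auto simp: norm_pair_rot[OF ij])
  also have "\<dots> = (\<integral>\<^sup>+\<theta>. (\<integral>\<^sup>+v. ennreal (norm v^2 * F v) \<partial>lborel) * indicator {0..2*pi} \<theta> \<partial>lborel)"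
    by (subst inv_pair[OF ij, where f="\<lambda>v. ennreal (norm v^2 * F v)"]) (auto)
  also have "\<dots> = ennreal (2*pi) * (\<integral>\<^sup>+v. ennreal (norm v^2 * F v) \<partial>lborel)"
    by (subst nn_integral_cmult) (auto simp: mult.commute)
  finally show ?thesis .
qed


lemma norm2_split: "norm (v::(real,'n::finite) vec)^2 = (v$j)^2 + (\<Sum>k\<in>UNIV-{j}. (v$k)^2)"
  unfolding norm2_vec by (subst sum.remove[of _ j]) auto

lemma norm2_upd: "norm (upd j x v)^2 - x^2 = norm v^2 - (v$j)^2"
proof -
  have "(\<Sum>k\<in>UNIV-{j}. (upd j x v $ k)^2) = (\<Sum>k\<in>UNIV-{j}. (v$k)^2)"
    by (rule sum.cong) (auto simp: upd_def)
  then show ?thesis using norm2_split[of "upd j x v" j] norm2_split[of v j] by simp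
qed

lemma comp_le_norm2: "(v$j)^2 \<le> norm (v::(real,'n::finite) vec)^2"
  using component_le_norm_cart[of v j] by (metis abs_le_square_iff abs_norm_cancel)

lemma thermo_upd_eq: "thermo_upd j w \<theta> v = upd j (v$j * cos \<theta> + w * sin \<theta>) v"
  by (simp add: thermo_upd_def upd_def vec_eq_iff)

lemma meas_thermo[measurable]:
  fixes j :: "'n::finite"
  assumes [measurable]: "w \<in> borel_measurable M" "t \<in> borel_measurable M" "v \<in> borel_measurable M"
  shows "(\<lambda>x. thermo_upd j (w x) (t x) (v x)) \<in> borel_measurable M"
  unfolding thermo_upd_eq by measurable

lemma R_pointwise:
  fixes v :: "(real,'n::finite) vec" and \<theta> :: real
  defines "c \<equiv> cos \<theta>" and "s \<equiv> sin \<theta>"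
  shows "(norm (upd j (fst (rot2 \<theta> (v$j, w))) v)^2 - (upd j (fst (rot2 \<theta> (v$j, w))) v $ j)^2
          + (upd j (fst (rot2 \<theta> (v$j, w))) v $ j * c - snd (rot2 \<theta> (v$j, w)) * s)^2) = norm v^2"
    and "snd (rot2 \<theta> (v$j, w)) = w * c - v$j * s"
    and "upd j (fst (rot2 \<theta> (v$j, w))) v = thermo_upd j w \<theta> v"
proof -
  have sc: "s * s + c * c = 1" using sin_cos_squared_add[of \<theta>] by (simp add: s_def c_def power2_eq_square)
  have "(v$j * c + w * s) * c - (- v$j * s + w * c) * s = v$j * (s * s + c * c)"
    by (simp add: algebra_simps)
  then have e: "(v$j * c + w * s) * c - (w * c - v$j * s) * s = v$j" using sc by simp
  show "(norm (upd j (fst (rot2 \<theta> (v$j, w))) v)^2 - (upd j (fst (rot2 \<theta> (v$j, w))) v $ j)^2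
          + (upd j (fst (rot2 \<theta> (v$j, w))) v $ j * c - snd (rot2 \<theta> (v$j, w)) * s)^2) = norm v^2"
    unfolding upd_same norm2_upd by (simp add: rot2_def c_def[symmetric] s_def[symmetric] e)
  show "snd (rot2 \<theta> (v$j, w)) = w * c - v$j * s" by (simp add: rot2_def c_def s_def)
  show "upd j (fst (rot2 \<theta> (v$j, w))) v = thermo_upd j w \<theta> v"
    by (simp add: rot2_def thermo_upd_eq)
qed


lemma R_part:
  fixes F :: "(real,'n::finite) vec \<Rightarrow> real" and g :: "real \<Rightarrow> real" and j :: 'n
  assumes Fm[measurable]: "F \<in> borel_measurable borel" and F0: "\<And>v. 0 \<le> F v"
    and gm[measurable]: "g \<in> borel_measurable borel" and g0: "\<And>w. 0 \<le> g w"
  shows "(\<integral>\<^sup>+v. ennreal (norm v^2) * (\<integral>\<^sup>+w. \<integral>\<^sup>+\<theta>. ennreal (g (w * cos \<theta> - v$j * sin \<theta>) * F (thermo_upd j w \<theta> v)) * indicator {0..2*pi} \<theta> \<partial>lborel \<partial>lborel) \<partial>lborel)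
   = ennreal (2*pi) * ((\<integral>\<^sup>+u. ennreal (F u * (norm u^2 - (u$j)^2/2)) \<partial>lborel) * (\<integral>\<^sup>+w. ennreal (g w) \<partial>lborel))
     + ennreal pi * ((\<integral>\<^sup>+u. ennreal (F u) \<partial>lborel) * (\<integral>\<^sup>+w. ennreal (w^2 * g w) \<partial>lborel))"
proof -
  define I where "I v w \<theta> = ennreal (norm v^2 * (g (w * cos \<theta> - v$j * sin \<theta>) * F (thermo_upd j w \<theta> v))) * indicator {0..2*pi} \<theta>"
    for v :: "(real,'n) vec" and w \<theta> :: real
  have Im2: "(\<lambda>q. I (fst (fst q)) (snd q) (snd (fst q))) \<in> borel_measurable (((lborel::(real,'n) vec measure) \<Otimes>\<^sub>M (lborel::real measure)) \<Otimes>\<^sub>M (lborel::real measure))"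
    unfolding I_def by measurable
  have Im3: "case_prod (\<lambda>v \<theta>. \<integral>\<^sup>+w. I v w \<theta> \<partial>lborel) \<in> borel_measurable ((lborel::(real,'n) vec measure) \<Otimes>\<^sub>M (lborel::real measure))"
  proof -
    have "(\<lambda>p. \<integral>\<^sup>+w. I (fst p) w (snd p) \<partial>lborel) \<in> borel_measurable ((lborel::(real,'n) vec measure) \<Otimes>\<^sub>M (lborel::real measure))"
      by (rule lborel.borel_measurable_nn_integral) (use Im2 in \<open>simp add: split_beta'\<close>)
    then show ?thesis by (simp add: split_beta')
  qed
  have S1: "(\<integral>\<^sup>+v. ennreal (norm v^2) * (\<integral>\<^sup>+w. \<integral>\<^sup>+\<theta>. ennreal (g (w * cos \<theta> - v$j * sin \<theta>) * F (thermo_upd j w \<theta> v)) * indicator {0..2*pi} \<theta> \<partial>lborel \<partial>lborel) \<partial>lborel)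
      = (\<integral>\<^sup>+v. \<integral>\<^sup>+w. \<integral>\<^sup>+\<theta>. I v w \<theta> \<partial>lborel \<partial>lborel \<partial>lborel)"
  proof (rule nn_integral_cong)
    fix v :: "(real,'n) vec"
    have "ennreal (norm v^2) * (\<integral>\<^sup>+w. \<integral>\<^sup>+\<theta>. ennreal (g (w * cos \<theta> - v$j * sin \<theta>) * F (thermo_upd j w \<theta> v)) * indicator {0..2*pi} \<theta> \<partial>lborel \<partial>lborel)
        = (\<integral>\<^sup>+w. ennreal (norm v^2) * \<integral>\<^sup>+\<theta>. ennreal (g (w * cos \<theta> - v$j * sin \<theta>) * F (thermo_upd j w \<theta> v)) * indicator {0..2*pi} \<theta> \<partial>lborel \<partial>lborel)"
      by (rule nn_integral_cmult[symmetric]) measurable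
    also have "\<dots> = (\<integral>\<^sup>+w. \<integral>\<^sup>+\<theta>. I v w \<theta> \<partial>lborel \<partial>lborel)"
    proof (rule nn_integral_cong)
      fix w :: real
      show "ennreal (norm v^2) * (\<integral>\<^sup>+\<theta>. ennreal (g (w * cos \<theta> - v$j * sin \<theta>) * F (thermo_upd j w \<theta> v)) * indicator {0..2*pi} \<theta> \<partial>lborel)
          = (\<integral>\<^sup>+\<theta>. I v w \<theta> \<partial>lborel)"
        unfolding I_def by (subst nn_integral_cmult[symmetric]) (auto simp: ennreal_mult F0 g0 mult.assoc)
    qed
    finally show "ennreal (norm v^2) * (\<integral>\<^sup>+w. \<integral>\<^sup>+\<theta>. ennreal (g (w * cos \<theta> - v$j * sin \<theta>) * F (thermo_upd j w \<theta> v)) * indicator {0..2*pi} \<theta> \<partial>lborel \<partial>lborel)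
       = (\<integral>\<^sup>+w. \<integral>\<^sup>+\<theta>. I v w \<theta> \<partial>lborel \<partial>lborel)" .
  qed
  have S2: "(\<integral>\<^sup>+v. \<integral>\<^sup>+w. \<integral>\<^sup>+\<theta>. I v w \<theta> \<partial>lborel \<partial>lborel \<partial>lborel) = (\<integral>\<^sup>+\<theta>. \<integral>\<^sup>+v. \<integral>\<^sup>+w. I v w \<theta> \<partial>lborel \<partial>lborel \<partial>lborel)"
  proof -
    have "(\<integral>\<^sup>+v. \<integral>\<^sup>+w. \<integral>\<^sup>+\<theta>. I v w \<theta> \<partial>lborel \<partial>lborel \<partial>lborel) = (\<integral>\<^sup>+v. \<integral>\<^sup>+\<theta>. \<integral>\<^sup>+w. I v w \<theta> \<partial>lborel \<partial>lborel \<partial>lborel)"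
    proof (rule nn_integral_cong)
      fix v :: "(real,'n) vec"
      show "(\<integral>\<^sup>+w. \<integral>\<^sup>+\<theta>. I v w \<theta> \<partial>lborel \<partial>lborel) = (\<integral>\<^sup>+\<theta>. \<integral>\<^sup>+w. I v w \<theta> \<partial>lborel \<partial>lborel)"
        by (rule lborel_pair.Fubini'[symmetric]) (unfold I_def, measurable)
    qed
    also have "\<dots> = (\<integral>\<^sup>+\<theta>. \<integral>\<^sup>+v. \<integral>\<^sup>+w. I v w \<theta> \<partial>lborel \<partial>lborel \<partial>lborel)"
      by (rule lborel_pair.Fubini'[symmetric]) (rule Im3)
    finally show ?thesis .
  qed
  define J where "J \<theta> u w' = ennreal (g w' * F u * (norm u^2 - (u$j)^2 + (u$j * cos \<theta> - w' * sin \<theta>)^2))"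
    for \<theta> w' :: real and u :: "(real,'n) vec"
  have S3: "(\<integral>\<^sup>+v. \<integral>\<^sup>+w. I v w \<theta> \<partial>lborel \<partial>lborel) = (\<integral>\<^sup>+u. \<integral>\<^sup>+w'. J \<theta> u w' \<partial>lborel \<partial>lborel) * indicator {0..2*pi} \<theta>" for \<theta>
  proof -
    have "(\<integral>\<^sup>+v. \<integral>\<^sup>+w. I v w \<theta> \<partial>lborel \<partial>lborel)
        = (\<integral>\<^sup>+v. (\<integral>\<^sup>+w. ennreal (norm v^2 * (g (w * cos \<theta> - v$j * sin \<theta>) * F (thermo_upd j w \<theta> v))) \<partial>lborel) * indicator {0..2*pi} \<theta> \<partial>lborel)"
      unfolding I_def by (intro nn_integral_cong nn_integral_multc) measurable
    also have "\<dots> = (\<integral>\<^sup>+v. \<integral>\<^sup>+w. ennreal (norm v^2 * (g (w * cos \<theta> - v$j * sin \<theta>) * F (thermo_upd j w \<theta> v))) \<partial>lborel \<partial>lborel) * indicator {0..2*pi} \<theta>"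
      by (rule nn_integral_multc) measurable
    also have "(\<integral>\<^sup>+v. \<integral>\<^sup>+w. ennreal (norm v^2 * (g (w * cos \<theta> - v$j * sin \<theta>) * F (thermo_upd j w \<theta> v))) \<partial>lborel \<partial>lborel)
       = (\<integral>\<^sup>+v. \<integral>\<^sup>+w. J \<theta> (upd j (fst (rot2 \<theta> (v$j,w))) v) (snd (rot2 \<theta> (v$j,w))) \<partial>lborel \<partial>lborel)"
    proof (intro nn_integral_cong)
      fix v :: "(real,'n) vec" and w :: real
      show "ennreal (norm v^2 * (g (w * cos \<theta> - v$j * sin \<theta>) * F (thermo_upd j w \<theta> v)))
          = J \<theta> (upd j (fst (rot2 \<theta> (v$j,w))) v) (snd (rot2 \<theta> (v$j,w)))"
        unfolding J_def by (simp only: R_pointwise(1)) (simp add: R_pointwise(2,3) algebra_simps)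
    qed
    also have "\<dots> = (\<integral>\<^sup>+u. \<integral>\<^sup>+w'. J \<theta> u w' \<partial>lborel \<partial>lborel)"
      by (rule inv_thermo) (unfold J_def, measurable)
    finally show ?thesis .
  qed
  have Jm: "(\<lambda>q. J (snd (fst q)) (fst (fst q)) (snd q) * indicator {0..2*pi} (snd (fst q))) \<in> borel_measurable (((lborel::(real,'n) vec measure) \<Otimes>\<^sub>M (lborel::real measure)) \<Otimes>\<^sub>M (lborel::real measure))"
    unfolding J_def by measurable
  have Jm3: "case_prod (\<lambda>u \<theta>. \<integral>\<^sup>+w'. J \<theta> u w' * indicator {0..2*pi} \<theta> \<partial>lborel) \<in> borel_measurable ((lborel::(real,'n) vec measure) \<Otimes>\<^sub>M (lborel::real measure))"
  proof -
    have "(\<lambda>p. \<integral>\<^sup>+w'. J (snd p) (fst p) w' * indicator {0..2*pi} (snd p) \<partial>lborel) \<in> borel_measurable ((lborel::(real,'n) vec measure) \<Otimes>\<^sub>M (lborel::real measure))"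
      by (rule lborel.borel_measurable_nn_integral) (use Jm in \<open>simp add: split_beta'\<close>)
    then show ?thesis by (simp add: split_beta')
  qed
  have S4: "(\<integral>\<^sup>+\<theta>. (\<integral>\<^sup>+u. \<integral>\<^sup>+w'. J \<theta> u w' \<partial>lborel \<partial>lborel) * indicator {0..2*pi} \<theta> \<partial>lborel)
      = (\<integral>\<^sup>+u. \<integral>\<^sup>+w'. ennreal (g w' * F u) * ennreal (2*pi*(norm u^2 - (u$j)^2) + pi*(u$j)^2 + pi*w'^2) \<partial>lborel \<partial>lborel)"
  proof -
    have "(\<integral>\<^sup>+\<theta>. (\<integral>\<^sup>+u. \<integral>\<^sup>+w'. J \<theta> u w' \<partial>lborel \<partial>lborel) * indicator {0..2*pi} \<theta> \<partial>lborel)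
        = (\<integral>\<^sup>+\<theta>. \<integral>\<^sup>+u. \<integral>\<^sup>+w'. J \<theta> u w' * indicator {0..2*pi} \<theta> \<partial>lborel \<partial>lborel \<partial>lborel)"
    proof (rule nn_integral_cong)
      fix \<theta> :: real
      have "(\<integral>\<^sup>+u. \<integral>\<^sup>+w'. J \<theta> u w' \<partial>lborel \<partial>lborel) * indicator {0..2*pi} \<theta>
          = (\<integral>\<^sup>+u. (\<integral>\<^sup>+w'. J \<theta> u w' \<partial>lborel) * indicator {0..2*pi} \<theta> \<partial>lborel)"
        by (rule nn_integral_multc[symmetric]) (unfold J_def, measurable)
      also have "\<dots> = (\<integral>\<^sup>+u. \<integral>\<^sup>+w'. J \<theta> u w' * indicator {0..2*pi} \<theta> \<partial>lborel \<partial>lborel)"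
        by (intro nn_integral_cong nn_integral_multc[symmetric]) (unfold J_def, measurable)
      finally show "(\<integral>\<^sup>+u. \<integral>\<^sup>+w'. J \<theta> u w' \<partial>lborel \<partial>lborel) * indicator {0..2*pi} \<theta>
          = (\<integral>\<^sup>+u. \<integral>\<^sup>+w'. J \<theta> u w' * indicator {0..2*pi} \<theta> \<partial>lborel \<partial>lborel)" .
    qed
    also have "\<dots> = (\<integral>\<^sup>+u. \<integral>\<^sup>+\<theta>. \<integral>\<^sup>+w'. J \<theta> u w' * indicator {0..2*pi} \<theta> \<partial>lborel \<partial>lborel \<partial>lborel)"
      by (rule lborel_pair.Fubini') (rule Jm3)
    also have "\<dots> = (\<integral>\<^sup>+u. \<integral>\<^sup>+w'. \<integral>\<^sup>+\<theta>. J \<theta> u w' * indicator {0..2*pi} \<theta> \<partial>lborel \<partial>lborel \<partial>lborel)"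
    proof (rule nn_integral_cong)
      fix u :: "(real,'n) vec"
      show "(\<integral>\<^sup>+\<theta>. \<integral>\<^sup>+w'. J \<theta> u w' * indicator {0..2*pi} \<theta> \<partial>lborel \<partial>lborel) = (\<integral>\<^sup>+w'. \<integral>\<^sup>+\<theta>. J \<theta> u w' * indicator {0..2*pi} \<theta> \<partial>lborel \<partial>lborel)"
        by (rule lborel_pair.Fubini') (unfold J_def, measurable)
    qed
    also have "\<dots> = (\<integral>\<^sup>+u. \<integral>\<^sup>+w'. ennreal (g w' * F u) * ennreal (2*pi*(norm u^2 - (u$j)^2) + pi*(u$j)^2 + pi*w'^2) \<partial>lborel \<partial>lborel)"
    proof (intro nn_integral_cong)
      fix u :: "(real,'n) vec" and w' :: real
      have B: "0 \<le> norm u^2 - (u$j)^2" using comp_le_norm2[of u j] by simp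
      have "(\<integral>\<^sup>+\<theta>. J \<theta> u w' * indicator {0..2*pi} \<theta> \<partial>lborel)
          = (\<integral>\<^sup>+\<theta>. ennreal (g w' * F u) * (ennreal (norm u^2 - (u$j)^2 + (u$j * cos \<theta> - w' * sin \<theta>)^2) * indicator {0..2*pi} \<theta>) \<partial>lborel)"
        unfolding J_def using B by (intro nn_integral_cong) (simp add: ennreal_mult F0 g0 mult.assoc)
      also have "\<dots> = ennreal (g w' * F u) * (\<integral>\<^sup>+\<theta>. ennreal (norm u^2 - (u$j)^2 + (u$j * cos \<theta> - w' * sin \<theta>)^2) * indicator {0..2*pi} \<theta> \<partial>lborel)"
        by (rule nn_integral_cmult) measurable
      also have "\<dots> = ennreal (g w' * F u) * ennreal (2*pi*(norm u^2 - (u$j)^2) + pi*(u$j)^2 + pi*w'^2)"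
        by (simp only: theta_nn[OF B])
      finally show "(\<integral>\<^sup>+\<theta>. J \<theta> u w' * indicator {0..2*pi} \<theta> \<partial>lborel) = ennreal (g w' * F u) * ennreal (2*pi*(norm u^2 - (u$j)^2) + pi*(u$j)^2 + pi*w'^2)" .
    qed
    finally show ?thesis .
  qed
  define A where "A u = ennreal (F u * (norm u^2 - (u$j)^2/2))" for u :: "(real,'n) vec"
  define C where "C u = ennreal (F u)" for u :: "(real,'n) vec"
  define G where "G w = ennreal (g w)" for w :: real
  define D where "D w = ennreal (w^2 * g w)" for w :: real
  have [measurable]: "A \<in> borel_measurable borel" unfolding A_def by measurable
  have [measurable]: "C \<in> borel_measurable borel" unfolding C_def by measurable
  have [measurable]: "G \<in> borel_measurable borel" unfolding G_def by measurable
  have [measurable]: "D \<in> borel_measurable borel" unfolding D_def by measurable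
  have pw: "ennreal (g w' * F u) * ennreal (2*pi*(norm u^2 - (u$j)^2) + pi*(u$j)^2 + pi*w'^2)
      = ennreal (2*pi) * (A u * G w') + ennreal pi * (C u * D w')" for u w'
  proof -
    have B: "0 \<le> norm u^2 - (u$j)^2/2" using comp_le_norm2[of u j] zero_le_power2[of "u$j"] by linarith
    have B': "0 \<le> norm u^2 - (u$j)^2" using comp_le_norm2[of u j] by simp
    have e1: "g w' * F u * (2*pi*(norm u^2 - (u$j)^2) + pi*(u$j)^2 + pi*w'^2)
        = 2*pi * (F u * (norm u^2 - (u$j)^2/2) * g w') + pi * (F u * (w'^2 * g w'))"
      by (simp add: algebra_simps)
    have p1: "0 \<le> 2*pi * (F u * (norm u^2 - (u$j)^2/2) * g w')" using B F0 g0 by simp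
    have p2: "0 \<le> pi * (F u * (w'^2 * g w'))" using F0 g0 by simp
    have "ennreal (g w' * F u) * ennreal (2*pi*(norm u^2 - (u$j)^2) + pi*(u$j)^2 + pi*w'^2)
        = ennreal (g w' * F u * (2*pi*(norm u^2 - (u$j)^2) + pi*(u$j)^2 + pi*w'^2))"
      using B' F0 g0 by (intro ennreal_mult[symmetric]) auto
    also have "\<dots> = ennreal (2*pi * (F u * (norm u^2 - (u$j)^2/2) * g w') + pi * (F u * (w'^2 * g w')))"
      by (simp only: e1)
    also have "\<dots> = ennreal (2*pi * (F u * (norm u^2 - (u$j)^2/2) * g w')) + ennreal (pi * (F u * (w'^2 * g w')))"
      by (rule ennreal_plus[OF p1 p2])
    also have "ennreal (2*pi * (F u * (norm u^2 - (u$j)^2/2) * g w')) = ennreal (2*pi) * (A u * G w')"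
      using B F0 g0 unfolding A_def G_def by (simp add: ennreal_mult)
    also have "ennreal (pi * (F u * (w'^2 * g w'))) = ennreal pi * (C u * D w')"
      using F0 g0 unfolding C_def D_def by (simp add: ennreal_mult)
    finally show ?thesis .
  qed
  have S5: "(\<integral>\<^sup>+u. \<integral>\<^sup>+w'. ennreal (g w' * F u) * ennreal (2*pi*(norm u^2 - (u$j)^2) + pi*(u$j)^2 + pi*w'^2) \<partial>lborel \<partial>lborel)
      = ennreal (2*pi) * ((\<integral>\<^sup>+u. A u \<partial>lborel) * (\<integral>\<^sup>+w. G w \<partial>lborel)) + ennreal pi * ((\<integral>\<^sup>+u. C u \<partial>lborel) * (\<integral>\<^sup>+w. D w \<partial>lborel))"
  proof -
    have "(\<integral>\<^sup>+u. \<integral>\<^sup>+w'. ennreal (g w' * F u) * ennreal (2*pi*(norm u^2 - (u$j)^2) + pi*(u$j)^2 + pi*w'^2) \<partial>lborel \<partial>lborel)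
        = (\<integral>\<^sup>+u. ennreal (2*pi) * (A u * (\<integral>\<^sup>+w. G w \<partial>lborel)) + ennreal pi * (C u * (\<integral>\<^sup>+w. D w \<partial>lborel)) \<partial>lborel)"
    proof (rule nn_integral_cong)
      fix u :: "(real,'n) vec"
      have "(\<integral>\<^sup>+w'. ennreal (g w' * F u) * ennreal (2*pi*(norm u^2 - (u$j)^2) + pi*(u$j)^2 + pi*w'^2) \<partial>lborel)
          = (\<integral>\<^sup>+w'. ennreal (2*pi) * (A u * G w') + ennreal pi * (C u * D w') \<partial>lborel)"
        by (rule nn_integral_cong) (rule pw)
      also have "\<dots> = (\<integral>\<^sup>+w'. ennreal (2*pi) * (A u * G w') \<partial>lborel) + (\<integral>\<^sup>+w'. ennreal pi * (C u * D w') \<partial>lborel)"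
        by (rule nn_integral_add) measurable
      also have "(\<integral>\<^sup>+w'. ennreal (2*pi) * (A u * G w') \<partial>lborel) = ennreal (2*pi) * (\<integral>\<^sup>+w'. A u * G w' \<partial>lborel)"
        by (rule nn_integral_cmult) measurable
      also have "(\<integral>\<^sup>+w'. A u * G w' \<partial>lborel) = A u * (\<integral>\<^sup>+w. G w \<partial>lborel)"
        by (rule nn_integral_cmult) measurable
      also have "(\<integral>\<^sup>+w'. ennreal pi * (C u * D w') \<partial>lborel) = ennreal pi * (\<integral>\<^sup>+w'. C u * D w' \<partial>lborel)"
        by (rule nn_integral_cmult) measurable
      also have "(\<integral>\<^sup>+w'. C u * D w' \<partial>lborel) = C u * (\<integral>\<^sup>+w. D w \<partial>lborel)"
        by (rule nn_integral_cmult) measurable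
      finally show "(\<integral>\<^sup>+w'. ennreal (g w' * F u) * ennreal (2*pi*(norm u^2 - (u$j)^2) + pi*(u$j)^2 + pi*w'^2) \<partial>lborel)
          = ennreal (2*pi) * (A u * (\<integral>\<^sup>+w. G w \<partial>lborel)) + ennreal pi * (C u * (\<integral>\<^sup>+w. D w \<partial>lborel))" .
    qed
    also have "\<dots> = (\<integral>\<^sup>+u. ennreal (2*pi) * (A u * (\<integral>\<^sup>+w. G w \<partial>lborel)) \<partial>lborel) + (\<integral>\<^sup>+u. ennreal pi * (C u * (\<integral>\<^sup>+w. D w \<partial>lborel)) \<partial>lborel)"
      by (rule nn_integral_add) measurable
    also have "(\<integral>\<^sup>+u. ennreal (2*pi) * (A u * (\<integral>\<^sup>+w. G w \<partial>lborel)) \<partial>lborel) = ennreal (2*pi) * (\<integral>\<^sup>+u. A u * (\<integral>\<^sup>+w. G w \<partial>lborel) \<partial>lborel)"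
      by (rule nn_integral_cmult) measurable
    also have "(\<integral>\<^sup>+u. A u * (\<integral>\<^sup>+w. G w \<partial>lborel) \<partial>lborel) = (\<integral>\<^sup>+u. A u \<partial>lborel) * (\<integral>\<^sup>+w. G w \<partial>lborel)"
      by (rule nn_integral_multc) measurable
    also have "(\<integral>\<^sup>+u. ennreal pi * (C u * (\<integral>\<^sup>+w. D w \<partial>lborel)) \<partial>lborel) = ennreal pi * (\<integral>\<^sup>+u. C u * (\<integral>\<^sup>+w. D w \<partial>lborel) \<partial>lborel)"
      by (rule nn_integral_cmult) measurable
    also have "(\<integral>\<^sup>+u. C u * (\<integral>\<^sup>+w. D w \<partial>lborel) \<partial>lborel) = (\<integral>\<^sup>+u. C u \<partial>lborel) * (\<integral>\<^sup>+w. D w \<partial>lborel)"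
      by (rule nn_integral_multc) measurable
    finally show ?thesis .
  qed
  have S3': "(\<integral>\<^sup>+\<theta>. \<integral>\<^sup>+v. \<integral>\<^sup>+w. I v w \<theta> \<partial>lborel \<partial>lborel \<partial>lborel) = (\<integral>\<^sup>+\<theta>. (\<integral>\<^sup>+u. \<integral>\<^sup>+w'. J \<theta> u w' \<partial>lborel \<partial>lborel) * indicator {0..2*pi} \<theta> \<partial>lborel)"
    by (rule nn_integral_cong) (rule S3)
  have "(\<integral>\<^sup>+v. ennreal (norm v^2) * (\<integral>\<^sup>+w. \<integral>\<^sup>+\<theta>. ennreal (g (w * cos \<theta> - v$j * sin \<theta>) * F (thermo_upd j w \<theta> v)) * indicator {0..2*pi} \<theta> \<partial>lborel \<partial>lborel) \<partial>lborel)
      = ennreal (2*pi) * ((\<integral>\<^sup>+u. A u \<partial>lborel) * (\<integral>\<^sup>+w. G w \<partial>lborel)) + ennreal pi * ((\<integral>\<^sup>+u. C u \<partial>lborel) * (\<integral>\<^sup>+w. D w \<partial>lborel))"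
    unfolding S1 S2 S3' S4 S5 ..
  then show ?thesis unfolding A_def C_def G_def D_def .
qed


lemma int_weighted:
  fixes X :: "'a \<Rightarrow> ennreal" and w :: "'a \<Rightarrow> real"
  assumes Xm[measurable]: "X \<in> borel_measurable M" and wm[measurable]: "w \<in> borel_measurable M"
    and w0: "\<And>x. 0 \<le> w x" and fin: "(\<integral>\<^sup>+x. ennreal (w x) * X x \<partial>M) < \<infinity>"
  shows "integrable M (\<lambda>x. w x * enn2real (X x))"
    and "integral\<^sup>L M (\<lambda>x. w x * enn2real (X x)) = enn2real (\<integral>\<^sup>+x. ennreal (w x) * X x \<partial>M)"
proof -
  have "AE x in M. ennreal (w x) * X x \<noteq> \<infinity>"
    by (rule nn_integral_PInf_AE) (use fin in auto)
  then have ae: "AE x in M. ennreal (w x * enn2real (X x)) = ennreal (w x) * X x"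
  proof (rule AE_mp, intro AE_I2 impI)
    fix x assume h: "ennreal (w x) * X x \<noteq> \<infinity>"
    show "ennreal (w x * enn2real (X x)) = ennreal (w x) * X x"
    proof (cases "X x = \<infinity>")
      case True
      then have "w x = 0" using h w0[of x] by (auto simp: ennreal_mult_eq_top_iff)
      then show ?thesis by simp
    next
      case False
      then show ?thesis using w0[of x] by (simp add: ennreal_mult ennreal_enn2real_if)
    qed
  qed
  have eq: "(\<integral>\<^sup>+x. ennreal (w x * enn2real (X x)) \<partial>M) = (\<integral>\<^sup>+x. ennreal (w x) * X x \<partial>M)"
    by (rule nn_integral_cong_AE[OF ae])
  show "integrable M (\<lambda>x. w x * enn2real (X x))"
    by (rule integrableI_nonneg) (use eq fin w0 in auto)
  show "integral\<^sup>L M (\<lambda>x. w x * enn2real (X x)) = enn2real (\<integral>\<^sup>+x. ennreal (w x) * X x \<partial>M)"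
    by (subst integral_eq_nn_integral) (use w0 eq in auto)
qed

lemma set_int_nn:
  fixes f :: "real \<Rightarrow> real"
  assumes [measurable]: "f \<in> borel_measurable borel" and f0: "\<And>x. 0 \<le> f x" and [measurable]: "A \<in> sets borel"
  shows "(LINT \<theta>:A|lborel. f \<theta>) = enn2real (\<integral>\<^sup>+\<theta>. ennreal (f \<theta>) * indicator A \<theta> \<partial>lborel)"
proof -
  have "(LINT \<theta>:A|lborel. f \<theta>) = integral\<^sup>L lborel (\<lambda>\<theta>. indicator A \<theta> * f \<theta>)"
    by (simp add: set_lebesgue_integral_def)
  also have "\<dots> = enn2real (\<integral>\<^sup>+\<theta>. ennreal (indicator A \<theta> * f \<theta>) \<partial>lborel)"
    by (rule integral_eq_nn_integral) (use f0 in auto)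
  also have "(\<integral>\<^sup>+\<theta>. ennreal (indicator A \<theta> * f \<theta>) \<partial>lborel) = (\<integral>\<^sup>+\<theta>. ennreal (f \<theta>) * indicator A \<theta> \<partial>lborel)"
    by (intro nn_integral_cong) (auto simp: indicator_def)
  finally show ?thesis .
qed

lemma card_pairs: "card {(i::'n::{finite,linorder}, j). i < j} = CARD('n) choose 2"
proof -
  have "bij_betw (\<lambda>(i,j). {i,j}) {(i::'n, j). i < j} {B. B \<subseteq> UNIV \<and> card B = 2}"
  proof (rule bij_betwI')
    fix x y assume "x \<in> {(i::'n, j). i < j}" "y \<in> {(i::'n, j). i < j}"
    then show "((case x of (i, j) \<Rightarrow> {i, j}) = (case y of (i, j) \<Rightarrow> {i, j})) = (x = y)"
      by (auto simp: doubleton_eq_iff)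
  next
    fix x assume "x \<in> {(i::'n, j). i < j}"
    then show "(case x of (i, j) \<Rightarrow> {i, j}) \<in> {B. B \<subseteq> UNIV \<and> card B = 2}" by auto
  next
    fix B :: "'n set" assume "B \<in> {B. B \<subseteq> UNIV \<and> card B = 2}"
    then obtain a b where ab: "B = {a,b}" "a \<noteq> b" by (auto simp: card_2_iff)
    show "\<exists>x\<in>{(i::'n, j). i < j}. B = (case x of (i, j) \<Rightarrow> {i, j})"
    proof (cases "a < b")
      case True then show ?thesis using ab by (intro bexI[of _ "(a,b)"]) auto
    next
      case False then have "b < a" using ab by auto
      then show ?thesis using ab by (intro bexI[of _ "(b,a)"]) auto
    qed
  qed
  then have "card {(i::'n, j). i < j} = card {B. B \<subseteq> (UNIV::'n set) \<and> card B = 2}"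
    by (rule bij_betw_same_card)
  also have "\<dots> = CARD('n) choose 2" by (rule n_subsets) simp
  finally show ?thesis .
qed


context
  fixes F :: "(real,'n::{finite,linorder}) vec \<Rightarrow> real" and g :: "real \<Rightarrow> real"
  assumes Fm[measurable]: "F \<in> borel_measurable borel" and F0: "\<And>v. 0 \<le> F v"
    and Fint: "integrable lborel (\<lambda>v. (1 + norm v ^ 2) * F v)" and Fmass: "(LINT v|lborel. F v) = 1"
    and gm[measurable]: "g \<in> borel_measurable borel" and g0: "\<And>w. 0 \<le> g w"
    and g_int: "integrable lborel g" and g_mass: "(LINT w|lborel. g w) = 1"
    and g_mom2: "integrable lborel (\<lambda>w. w\<^sup>2 * g w)"
begin

lemma F_le: "F x \<le> (1 + norm x^2) * F x" "norm x^2 * F x \<le> (1 + norm x^2) * F x"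
proof -
  have "0 \<le> norm x^2 * F x" by (simp add: F0)
  then show "F x \<le> (1 + norm x^2) * F x" "norm x^2 * F x \<le> (1 + norm x^2) * F x"
    using F0[of x] by (simp_all add: algebra_simps)
qed

lemma F_int: "integrable lborel F"
  by (rule Bochner_Integration.integrable_bound[OF Fint]) (auto simp: F0 F_le intro!: AE_I2)

lemma K_int: "integrable lborel (\<lambda>v. norm v^2 * F v)"
  by (rule Bochner_Integration.integrable_bound[OF Fint]) (auto simp: F0 F_le intro!: AE_I2)

lemma comp_int: "integrable lborel (\<lambda>v. (v$j)^2 * F v)"
proof (rule Bochner_Integration.integrable_bound[OF K_int])
  show "(\<lambda>v. (v$j)^2 * F v) \<in> borel_measurable lborel" by measurable
  show "AE v in lborel. norm ((v$j)^2 * F v) \<le> norm (norm v^2 * F v)"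
    using comp_le_norm2 F0 by (auto intro!: AE_I2 mult_right_mono)
qed

lemma nnF: "(\<integral>\<^sup>+v. ennreal (F v) \<partial>lborel) = 1"
  using nn_integral_eq_integral[OF F_int] F0 Fmass by simp

lemma nnK: "(\<integral>\<^sup>+v. ennreal (norm v^2 * F v) \<partial>lborel) = ennreal (LINT v|lborel. norm v^2 * F v)"
  using nn_integral_eq_integral[OF K_int] F0 by simp

lemma nng: "(\<integral>\<^sup>+w. ennreal (g w) \<partial>lborel) = 1"
  using nn_integral_eq_integral[OF g_int] g0 g_mass by simp

lemma nng2: "(\<integral>\<^sup>+w. ennreal (w^2 * g w) \<partial>lborel) = ennreal (LINT w|lborel. w^2 * g w)"
  using nn_integral_eq_integral[OF g_mom2] g0 by simp

definition NQ :: "'n \<Rightarrow> 'n \<Rightarrow> (real,'n) vec \<Rightarrow> ennreal" where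
  "NQ i j v = (\<integral>\<^sup>+\<theta>. ennreal (F (pair_rot i j \<theta> v)) * indicator {0..2*pi} \<theta> \<partial>lborel)"

lemma NQ_meas[measurable]: "NQ i j \<in> borel_measurable borel"
  unfolding NQ_def by measurable

lemma kacQ_eq: "kac_Q F v = (1 / real (CARD('n) choose 2)) *
     (\<Sum>(i,j) \<in> {(i,j). i < j}. (1 / (2*pi)) * enn2real (NQ i j v))"
  unfolding kac_Q_def NQ_def
  by (intro arg_cong2[where f="(*)"] refl sum.cong) (auto simp: F0 set_int_nn)

lemma Q_weighted:
  assumes "i \<noteq> j"
  shows "integrable lborel (\<lambda>v. norm v^2 * enn2real (NQ i j v))"
    and "(LINT v|lborel. norm v^2 * enn2real (NQ i j v)) = 2*pi * (LINT v|lborel. norm v^2 * F v)"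
proof -
  have eq: "(\<integral>\<^sup>+v. ennreal (norm v^2) * NQ i j v \<partial>lborel) = ennreal (2*pi) * ennreal (LINT v|lborel. norm v^2 * F v)"
    unfolding NQ_def Q_part[OF assms Fm F0] nnK ..
  have fin: "(\<integral>\<^sup>+v. ennreal (norm v^2) * NQ i j v \<partial>lborel) < \<infinity>"
    unfolding eq by (simp add: ennreal_mult_less_top)
  show "integrable lborel (\<lambda>v. norm v^2 * enn2real (NQ i j v))"
    by (rule int_weighted(1)[OF _ _ _ fin]) auto
  have "(LINT v|lborel. norm v^2 * enn2real (NQ i j v)) = enn2real (ennreal (2*pi) * ennreal (LINT v|lborel. norm v^2 * F v))"
    using int_weighted(2)[OF _ _ _ fin] eq by simp
  also have "\<dots> = 2*pi * (LINT v|lborel. norm v^2 * F v)"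
    using integral_nonneg_AE[of "\<lambda>v. norm v^2 * F v" lborel] F0
    by (simp add: enn2real_mult)
  finally show "(LINT v|lborel. norm v^2 * enn2real (NQ i j v)) = 2*pi * (LINT v|lborel. norm v^2 * F v)" .
qed

lemma Q_total:
  assumes N2: "CARD('n) \<ge> 2"
  shows "integrable lborel (\<lambda>v. norm v^2 * kac_Q F v)"
    and "(LINT v|lborel. norm v^2 * kac_Q F v) = (LINT v|lborel. norm v^2 * F v)"
proof -
  define P where "P = {(i::'n, j). i < j}"
  define c0 where "c0 = 1 / real (CARD('n) choose 2)"
  have eq: "norm v^2 * kac_Q F v = c0 * (\<Sum>p\<in>P. (1/(2*pi)) * (norm v^2 * enn2real (NQ (fst p) (snd p) v)))" for v
    unfolding kacQ_eq c0_def P_def by (simp add: sum_distrib_left split_beta' algebra_simps)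
  have ij: "p \<in> P \<Longrightarrow> fst p \<noteq> snd p" for p by (auto simp: P_def)
  have int: "integrable lborel (\<lambda>v. c0 * (\<Sum>p\<in>P. (1/(2*pi)) * (norm v^2 * enn2real (NQ (fst p) (snd p) v))))"
    using Q_weighted(1)[OF ij] by (intro integrable_mult_right integrable_sum) auto
  then show "integrable lborel (\<lambda>v. norm v^2 * kac_Q F v)" by (simp only: eq)
  have "(LINT v|lborel. norm v^2 * kac_Q F v) = (LINT v|lborel. c0 * (\<Sum>p\<in>P. (1/(2*pi)) * (norm v^2 * enn2real (NQ (fst p) (snd p) v))))"
    by (simp only: eq)
  also have "\<dots> = c0 * (\<Sum>p\<in>P. (1/(2*pi)) * (LINT v|lborel. norm v^2 * enn2real (NQ (fst p) (snd p) v)))"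
    using Q_weighted(1)[OF ij] by (simp add: integral_sum)
  also have "\<dots> = c0 * (\<Sum>p\<in>P. (LINT v|lborel. norm v^2 * F v))"
    using Q_weighted(2)[OF ij] by simp
  also have "\<dots> = c0 * real (card P) * (LINT v|lborel. norm v^2 * F v)" by simp
  also have "real (card P) = real (CARD('n) choose 2)" unfolding P_def card_pairs ..
  also have "c0 * real (CARD('n) choose 2) = 1"
  proof -
    have "CARD('n) choose 2 > 0" using N2 by simp
    then show ?thesis by (simp add: c0_def)
  qed
  finally show "(LINT v|lborel. norm v^2 * kac_Q F v) = (LINT v|lborel. norm v^2 * F v)" by simp
qed

definition NR :: "'n \<Rightarrow> (real,'n) vec \<Rightarrow> real \<Rightarrow> ennreal" where
  "NR j v w = (\<integral>\<^sup>+\<theta>. ennreal (g (w * cos \<theta> - v$j * sin \<theta>) * F (thermo_upd j w \<theta> v)) * indicator {0..2*pi} \<theta> \<partial>lborel)"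

definition PR :: "'n \<Rightarrow> (real,'n) vec \<Rightarrow> ennreal" where
  "PR j v = (\<integral>\<^sup>+w. ennreal ((1/(2*pi)) * enn2real (NR j v w)) \<partial>lborel)"

definition MR :: "'n \<Rightarrow> (real,'n) vec \<Rightarrow> ennreal" where
  "MR j v = (\<integral>\<^sup>+w. NR j v w \<partial>lborel)"

lemma NR_meas[measurable]: "case_prod (NR j) \<in> borel_measurable (lborel \<Otimes>\<^sub>M lborel)"
proof -
  have "(\<lambda>p. NR j (fst p) (snd p)) \<in> borel_measurable (lborel \<Otimes>\<^sub>M lborel)"
    unfolding NR_def by measurable
  then show ?thesis by (simp add: split_beta')
qed

lemma NR_meas2[measurable]: "NR j v \<in> borel_measurable borel"
  unfolding NR_def by measurable

lemma PR_meas[measurable]: "PR j \<in> borel_measurable borel"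
  unfolding PR_def by measurable

lemma MR_meas[measurable]: "MR j \<in> borel_measurable borel"
  unfolding MR_def by measurable

lemma kacR_eq: "kac_R g j F v = enn2real (PR j v)"
proof -
  have "kac_R g j F v = (LINT w|lborel. (1/(2*pi)) * enn2real (NR j v w))"
    unfolding kac_R_def NR_def
    by (intro Bochner_Integration.integral_cong refl arg_cong2[where f="(*)"] set_int_nn) (auto simp: F0 g0)
  also have "\<dots> = enn2real (PR j v)"
    unfolding PR_def by (rule integral_eq_nn_integral) auto
  finally show ?thesis .
qed

lemma ennreal_c_enn2real: "0 \<le> c \<Longrightarrow> x \<noteq> top \<Longrightarrow> ennreal (c * enn2real x) = ennreal c * x"
  by (subst ennreal_mult) (auto simp: less_top[symmetric])

lemma A_int: "integrable lborel (\<lambda>u. F u * (norm u^2 - (u$j)^2/2))"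
proof (rule Bochner_Integration.integrable_bound[OF K_int])
  show "(\<lambda>u. F u * (norm u^2 - (u$j)^2/2)) \<in> borel_measurable lborel" by measurable
  show "AE v in lborel. norm (F v * (norm v^2 - (v$j)^2/2)) \<le> norm (norm v^2 * F v)"
  proof (intro AE_I2)
    fix v :: "(real,'n) vec"
    have a: "0 \<le> norm v^2 - (v$j)^2/2" using comp_le_norm2[of v j] zero_le_power2[of "v$j"] by linarith
    have b: "norm v^2 - (v$j)^2/2 \<le> norm v^2" by simp
    show "norm (F v * (norm v^2 - (v$j)^2/2)) \<le> norm (norm v^2 * F v)"
      using a b F0[of v] by (simp add: abs_mult mult_left_mono mult.commute)
  qed
qed

lemma R_weighted:
  shows "integrable lborel (\<lambda>v. norm v^2 * kac_R g j F v)"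
    and "(LINT v|lborel. norm v^2 * kac_R g j F v) = (LINT u|lborel. F u * (norm u^2 - (u$j)^2/2)) + (LINT w|lborel. w^2 * g w) / 2"
proof -
  define IA where "IA = (LINT u|lborel. F u * (norm u^2 - (u$j)^2/2))"
  define Kg where "Kg = (LINT w|lborel. w^2 * g w)"
  have IA0: "0 \<le> IA" unfolding IA_def
  proof (rule integral_nonneg_AE, intro AE_I2)
    fix v :: "(real,'n) vec"
    have a: "0 \<le> norm v^2 - (v$j)^2/2" using comp_le_norm2[of v j] zero_le_power2[of "v$j"] by linarith
    show "0 \<le> F v * (norm v^2 - (v$j)^2/2)" using a F0[of v] by simp
  qed
  have Kg0: "0 \<le> Kg" unfolding Kg_def by (rule integral_nonneg_AE) (auto simp: g0)
  have nnA: "(\<integral>\<^sup>+u. ennreal (F u * (norm u^2 - (u$j)^2/2)) \<partial>lborel) = ennreal IA"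
  proof -
    have "AE v in lborel. 0 \<le> F v * (norm v^2 - (v$j)^2/2)"
    proof (intro AE_I2)
      fix v :: "(real,'n) vec"
      have a: "0 \<le> norm v^2 - (v$j)^2/2" using comp_le_norm2[of v j] zero_le_power2[of "v$j"] by linarith
      show "0 \<le> F v * (norm v^2 - (v$j)^2/2)" using a F0[of v] by simp
    qed
    then show ?thesis unfolding IA_def by (rule nn_integral_eq_integral[OF A_int])
  qed
  define V where "V = ennreal (2*pi) * (ennreal IA * 1) + ennreal pi * (1 * ennreal Kg)"
  have MRV: "(\<integral>\<^sup>+v. ennreal (norm v^2) * MR j v \<partial>lborel) = V"
    unfolding MR_def NR_def V_def R_part[OF Fm F0 gm g0] nnA nnF nng nng2 Kg_def ..
  have Vfin: "V < \<infinity>" unfolding V_def by (simp add: ennreal_mult_less_top)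
  have "AE v in lborel. ennreal (norm v^2) * MR j v \<noteq> \<infinity>"
    by (rule nn_integral_PInf_AE) (use MRV Vfin in auto)
  then have ae: "AE v in lborel. ennreal (norm v^2) * PR j v = ennreal (1/(2*pi)) * (ennreal (norm v^2) * MR j v)"
  proof (rule AE_mp, intro AE_I2 impI)
    fix v :: "(real,'n) vec" assume h: "ennreal (norm v^2) * MR j v \<noteq> \<infinity>"
    show "ennreal (norm v^2) * PR j v = ennreal (1/(2*pi)) * (ennreal (norm v^2) * MR j v)"
    proof (cases "norm v = 0")
      case True then show ?thesis by simp
    next
      case False
      then have "MR j v \<noteq> \<infinity>" using h by (auto simp: ennreal_mult_eq_top_iff)
      then have "AE w in lborel. NR j v w \<noteq> \<infinity>"
        unfolding MR_def by (intro nn_integral_PInf_AE) auto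
      then have "AE w in lborel. ennreal ((1/(2*pi)) * enn2real (NR j v w)) = ennreal (1/(2*pi)) * NR j v w"
        by (rule AE_mp) (intro AE_I2 impI ennreal_c_enn2real, auto)
      then have "PR j v = (\<integral>\<^sup>+w. ennreal (1/(2*pi)) * NR j v w \<partial>lborel)"
        unfolding PR_def by (rule nn_integral_cong_AE)
      also have "\<dots> = ennreal (1/(2*pi)) * MR j v"
        unfolding MR_def by (rule nn_integral_cmult) measurable
      finally show ?thesis by (simp add: mult.left_commute)
    qed
  qed
  have PRV: "(\<integral>\<^sup>+v. ennreal (norm v^2) * PR j v \<partial>lborel) = ennreal (1/(2*pi)) * V"
  proof -
    have "(\<integral>\<^sup>+v. ennreal (norm v^2) * PR j v \<partial>lborel) = (\<integral>\<^sup>+v. ennreal (1/(2*pi)) * (ennreal (norm v^2) * MR j v) \<partial>lborel)"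
      by (rule nn_integral_cong_AE[OF ae])
    also have "\<dots> = ennreal (1/(2*pi)) * V"
      by (subst nn_integral_cmult) (auto simp: MRV)
    finally show ?thesis .
  qed
  have fin: "(\<integral>\<^sup>+v. ennreal (norm v^2) * PR j v \<partial>lborel) < \<infinity>"
    unfolding PRV using Vfin by (simp add: ennreal_mult_less_top)
  have eqR: "norm v^2 * kac_R g j F v = norm v^2 * enn2real (PR j v)" for v by (simp add: kacR_eq)
  show "integrable lborel (\<lambda>v. norm v^2 * kac_R g j F v)"
    unfolding eqR by (rule int_weighted(1)[OF _ _ _ fin]) auto
  have "(LINT v|lborel. norm v^2 * kac_R g j F v) = enn2real (ennreal (1/(2*pi)) * V)"
    unfolding eqR using int_weighted(2)[OF _ _ _ fin] PRV by simp
  also have "\<dots> = (1/(2*pi)) * (2*pi*IA + pi*Kg)"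
  proof -
    have "V = ennreal (2*pi*IA + pi*Kg)" unfolding V_def using IA0 Kg0
      by (simp add: ennreal_plus ennreal_mult)
    then have "ennreal (1/(2*pi)) * V = ennreal ((1/(2*pi)) * (2*pi*IA + pi*Kg))"
      using IA0 Kg0 by (simp only:) (rule ennreal_mult[symmetric], auto)
    then show ?thesis using IA0 Kg0 by simp
  qed
  also have "\<dots> = IA + Kg/2" by (simp add: field_simps)
  finally show "(LINT v|lborel. norm v^2 * kac_R g j F v) = (LINT u|lborel. F u * (norm u^2 - (u$j)^2/2)) + (LINT w|lborel. w^2 * g w) / 2"
    unfolding IA_def Kg_def .
qed

lemma kacQ_meas[measurable]: "kac_Q F \<in> borel_measurable borel"
  unfolding kacQ_eq[abs_def] by (simp add: split_beta') measurable

lemma kacR_meas[measurable]: "kac_R g j F \<in> borel_measurable borel"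
  unfolding kacR_eq[abs_def] by measurable

lemma kac_gen_meas: "kac_gen lam mu g F \<in> borel_measurable borel"
  unfolding kac_gen_def[abs_def] by measurable

lemma gen_total:
  assumes N2: "CARD('n) \<ge> 2"
  shows "integrable lborel (\<lambda>v. norm v^2 * kac_gen lam mu g F v)"
    and "(LINT v|lborel. norm v^2 * kac_gen lam mu g F v)
         = - (mu/2) * ((LINT v|lborel. norm v^2 * F v) - real CARD('n) * (LINT w|lborel. w^2 * g w))"
proof -
  define N where "N = real CARD('n)"
  define K where "K = (LINT v|lborel. norm v^2 * F v)"
  define Kg where "Kg = (LINT w|lborel. w^2 * g w)"
  have eq: "norm v^2 * kac_gen lam mu g F v =
     - lam * N * (norm v^2 * F v - norm v^2 * kac_Q F v) - mu * (\<Sum>j\<in>UNIV. norm v^2 * F v - norm v^2 * kac_R g j F v)" for v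
    unfolding kac_gen_def N_def by (simp add: sum_distrib_left algebra_simps)
  note QI = Q_total[OF N2] and RI = R_weighted
  have int: "integrable lborel (\<lambda>v. - lam * N * (norm v^2 * F v - norm v^2 * kac_Q F v) - mu * (\<Sum>j\<in>UNIV. norm v^2 * F v - norm v^2 * kac_R g j F v))"
    using QI(1) RI(1) K_int by (intro Bochner_Integration.integrable_diff integrable_mult_right integrable_sum) auto
  then show "integrable lborel (\<lambda>v. norm v^2 * kac_gen lam mu g F v)" by (simp only: eq)
  have cj: "(LINT u|lborel. F u * (norm u^2 - (u$j)^2/2)) = K - (1/2) * (LINT u|lborel. (u$j)^2 * F u)" for j
  proof -
    have "(LINT u|lborel. F u * (norm u^2 - (u$j)^2/2)) = (LINT u|lborel. norm u^2 * F u - (1/2) * ((u$j)^2 * F u))"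
      by (rule Bochner_Integration.integral_cong) (auto simp: algebra_simps)
    also have "\<dots> = K - (1/2) * (LINT u|lborel. (u$j)^2 * F u)"
      using K_int comp_int[of j] by (simp add: K_def)
    finally show ?thesis .
  qed
  have sumc: "(\<Sum>j\<in>UNIV. (LINT u|lborel. (u$j)^2 * F u)) = K"
  proof -
    have "(\<Sum>j\<in>UNIV. (LINT u|lborel. (u$j)^2 * F u)) = (LINT u|lborel. (\<Sum>j\<in>UNIV. (u$j)^2 * F u))"
      using comp_int by (simp add: integral_sum)
    also have "\<dots> = K" unfolding K_def norm2_vec by (simp add: sum_distrib_right)
    finally show ?thesis .
  qed
  have "(LINT v|lborel. norm v^2 * kac_gen lam mu g F v)
      = (LINT v|lborel. - lam * N * (norm v^2 * F v - norm v^2 * kac_Q F v) - mu * (\<Sum>j\<in>UNIV. norm v^2 * F v - norm v^2 * kac_R g j F v))"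
    by (simp only: eq)
  also have "\<dots> = - lam * N * (K - K) - mu * (\<Sum>j\<in>UNIV. K - ((K - (1/2) * (LINT u|lborel. (u$j)^2 * F u)) + Kg/2))"
    using QI RI K_int by (simp add: integral_sum integrable_sum cj K_def Kg_def)
  also have "\<dots> = - mu * ((1/2) * (\<Sum>j\<in>UNIV. (LINT u|lborel. (u$j)^2 * F u)) - N * Kg / 2)"
  proof -
    have "(\<Sum>j\<in>UNIV. K - ((K - (1/2) * (LINT u|lborel. (u$j)^2 * F u)) + Kg/2))
        = (\<Sum>j\<in>UNIV. (1/2) * (LINT u|lborel. (u$j)^2 * F u) - Kg/2)"
      by (rule sum.cong) auto
    also have "\<dots> = (1/2) * (\<Sum>j\<in>UNIV. (LINT u|lborel. (u$j)^2 * F u)) - N * Kg / 2"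
      by (simp add: sum_subtractf sum_distrib_left N_def)
    finally show ?thesis by simp
  qed
  also have "\<dots> = - (mu/2) * (K - N * Kg)" unfolding sumc by (simp add: field_simps)
  finally show "(LINT v|lborel. norm v^2 * kac_gen lam mu g F v)
         = - (mu/2) * ((LINT v|lborel. norm v^2 * F v) - real CARD('n) * (LINT w|lborel. w^2 * g w))"
    unfolding K_def N_def Kg_def .
qed

end


lemma weighted_meas:
  fixes f :: "(real,'n::finite) vec \<Rightarrow> real"
  assumes "integrable lborel (\<lambda>v. (1 + norm v ^ 2) * f v)"
  shows "f \<in> borel_measurable borel"
proof -
  have m: "(\<lambda>v. (1 + norm v ^ 2) * f v) \<in> borel_measurable borel"
    using borel_measurable_integrable[OF assms] by simp
  have "(\<lambda>v. ((1 + norm v ^ 2) * f v) / (1 + norm v ^ 2)) \<in> borel_measurable borel"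
    using m by measurable
  moreover have "(\<lambda>v. ((1 + norm v ^ 2) * f v) / (1 + norm v ^ 2)) = f"
  proof
    fix v :: "(real,'n) vec"
    have "1 + norm v ^ 2 \<noteq> 0" by (smt (verit) zero_le_power2)
    then show "((1 + norm v ^ 2) * f v) / (1 + norm v ^ 2) = f v" by simp
  qed
  ultimately show ?thesis by simp
qed

lemma deriv_K:
  fixes lam mu :: real and g :: "real \<Rightarrow> real"
    and F :: "real \<Rightarrow> (real, 'n::{finite,linorder}) vec \<Rightarrow> real"
  assumes N2: "CARD('n) \<ge> 2"
    and g_meas: "g \<in> borel_measurable borel"
    and g_nonneg: "\<forall>w. g w \<ge> 0"
    and g_int: "integrable lborel g" and g_mass: "(LINT w|lborel. g w) = 1"
    and g_mom2: "integrable lborel (\<lambda>w. w\<^sup>2 * g w)"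
    and sol: "kac_solution lam mu g F"
    and t: "t \<ge> 0"
  shows "(kinetic_energy F has_real_derivative
           (- (mu/2) * (kinetic_energy F t - real CARD('n) * (LINT w|lborel. w\<^sup>2 * g w)))) (at t within {0..})"
proof -
  have solt: "\<And>s. s \<ge> 0 \<Longrightarrow> (\<forall>v. F s v \<ge> 0) \<and>
        integrable lborel (\<lambda>v. (1 + norm v ^ 2) * F s v) \<and>
        (LINT v|lborel. F s v) = 1 \<and>
        integrable lborel (\<lambda>v. (1 + norm v ^ 2) * \<bar>kac_gen lam mu g (F s) v\<bar>) \<and>
        ((\<lambda>h. wnorm (\<lambda>v. (F (s + h) v - F s v) / h - kac_gen lam mu g (F s) v))
           \<longlongrightarrow> 0) (at 0 within {h. 0 \<le> s + h})"
    using sol unfolding kac_solution_def by blast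
  have Fm: "\<And>s. s \<ge> 0 \<Longrightarrow> F s \<in> borel_measurable borel"
    using solt weighted_meas by blast
  have Kint: "\<And>s. s \<ge> 0 \<Longrightarrow> integrable lborel (\<lambda>v. norm v^2 * F s v)"
  proof -
    fix s :: real assume s: "s \<ge> 0"
    show "integrable lborel (\<lambda>v. norm v^2 * F s v)"
    proof (rule Bochner_Integration.integrable_bound)
      show "integrable lborel (\<lambda>v. (1 + norm v ^ 2) * F s v)" using solt[OF s] by blast
      show "(\<lambda>v. norm v^2 * F s v) \<in> borel_measurable lborel" using Fm[OF s] by measurable
      show "AE v in lborel. norm (norm v^2 * F s v) \<le> norm ((1 + norm v ^ 2) * F s v)"
      proof (intro AE_I2)
        fix v :: "(real,'n) vec"
        have "0 \<le> F s v" using solt[OF s] by blast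
        then show "norm (norm v^2 * F s v) \<le> norm ((1 + norm v ^ 2) * F s v)"
          by (simp add: abs_mult algebra_simps)
      qed
    qed
  qed
  define G where "G = kac_gen lam mu g (F t)"
  define Dt where "Dt = (LINT v|lborel. norm v^2 * G v)"
  define Kg where "Kg = (LINT w|lborel. w\<^sup>2 * g w)"
  have st: "(\<forall>v. F t v \<ge> 0)" "integrable lborel (\<lambda>v. (1 + norm v ^ 2) * F t v)" "(LINT v|lborel. F t v) = 1"
     "integrable lborel (\<lambda>v. (1 + norm v ^ 2) * \<bar>G v\<bar>)"
     "((\<lambda>h. wnorm (\<lambda>v. (F (t + h) v - F t v) / h - G v)) \<longlongrightarrow> 0) (at 0 within {h. 0 \<le> t + h})"
    using solt[OF t] unfolding G_def by blast+
  have Gm[measurable]: "G \<in> borel_measurable borel"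
    unfolding G_def
    by (rule kac_gen_meas[OF Fm[OF t] _ st(2) st(3) g_meas _ g_int g_mass g_mom2]) (use st(1) g_nonneg in auto)
  have Dt_eq: "Dt = - (mu/2) * (kinetic_energy F t - real CARD('n) * Kg)"
    unfolding Dt_def G_def kinetic_energy_def Kg_def
    by (rule gen_total(2)[OF Fm[OF t] _ st(2) st(3) g_meas _ g_int g_mass g_mom2 N2]) (use st(1) g_nonneg in auto)
  have GW: "integrable lborel (\<lambda>v. (1 + norm v ^ 2) * G v)"
    by (rule Bochner_Integration.integrable_bound[OF st(4)]) (auto intro!: AE_I2 simp: abs_mult)
  have G2: "integrable lborel (\<lambda>v. norm v ^ 2 * G v)"
    by (rule Bochner_Integration.integrable_bound[OF st(4)]) (auto intro!: AE_I2 simp: abs_mult mult_right_mono)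
  have bound: "\<bar>(kinetic_energy F (t + h) - kinetic_energy F t) / h - Dt\<bar>
      \<le> wnorm (\<lambda>v. (F (t + h) v - F t v) / h - G v)" if h: "0 \<le> t + h" for h
  proof -
    define \<Delta> where "\<Delta> v = (F (t + h) v - F t v) / h - G v" for v
    have sh: "integrable lborel (\<lambda>v. (1 + norm v ^ 2) * F (t+h) v)" using solt[OF h] by blast
    have WD: "integrable lborel (\<lambda>v. (1 + norm v ^ 2) * \<Delta> v)"
    proof -
      have "integrable lborel (\<lambda>v. ((1 + norm v ^ 2) * F (t+h) v) / h - ((1 + norm v ^ 2) * F t v) / h - (1 + norm v ^ 2) * G v)"
        using sh st(2) GW by (intro Bochner_Integration.integrable_diff integrable_divide) auto
      moreover have "(\<lambda>v. ((1 + norm v ^ 2) * F (t+h) v) / h - ((1 + norm v ^ 2) * F t v) / h - (1 + norm v ^ 2) * G v)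
          = (\<lambda>v. (1 + norm v ^ 2) * \<Delta> v)"
        by (auto simp: \<Delta>_def field_simps diff_divide_distrib)
      ultimately show ?thesis by simp
    qed
    have Dm: "\<Delta> \<in> borel_measurable borel" unfolding \<Delta>_def using Fm[OF h] Fm[OF t] by measurable
    have N2D: "integrable lborel (\<lambda>v. norm v ^ 2 * \<Delta> v)"
      by (rule Bochner_Integration.integrable_bound[OF WD]) (use Dm in \<open>auto intro!: AE_I2 simp: abs_mult mult_right_mono\<close>)
    have "(kinetic_energy F (t + h) - kinetic_energy F t) / h - Dt = (LINT v|lborel. norm v^2 * \<Delta> v)"
    proof -
      have "(LINT v|lborel. norm v^2 * \<Delta> v) = (LINT v|lborel. (norm v^2 * F (t+h) v) / h - (norm v^2 * F t v) / h - norm v^2 * G v)"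
        by (rule Bochner_Integration.integral_cong) (auto simp: \<Delta>_def field_simps diff_divide_distrib)
      also have "\<dots> = (kinetic_energy F (t + h) - kinetic_energy F t) / h - Dt"
        using Kint[OF h] Kint[OF t] G2
        by (simp add: kinetic_energy_def Dt_def diff_divide_distrib Bochner_Integration.integral_diff integrable_divide)
      finally show ?thesis by simp
    qed
    also have "\<bar>\<dots>\<bar> \<le> (LINT v|lborel. \<bar>norm v^2 * \<Delta> v\<bar>)"
      by (rule integral_abs_bound)
    also have "\<dots> \<le> (LINT v|lborel. (1 + norm v ^ 2) * \<bar>\<Delta> v\<bar>)"
    proof -
      have A1: "integrable lborel (\<lambda>v. \<bar>norm v^2 * \<Delta> v\<bar>)" using integrable_abs[OF N2D] .
      have A2: "integrable lborel (\<lambda>v. \<bar>(1 + norm v ^ 2) * \<Delta> v\<bar>)" using integrable_abs[OF WD] .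
      have e2: "\<bar>(1 + norm v ^ 2) * \<Delta> v\<bar> = (1 + norm v ^ 2) * \<bar>\<Delta> v\<bar>" for v
        by (simp add: abs_mult)
      have A2': "integrable lborel (\<lambda>v. (1 + norm v ^ 2) * \<bar>\<Delta> v\<bar>)" using A2 unfolding e2 .
      show ?thesis
        by (rule integral_mono[OF A1 A2']) (simp add: abs_mult algebra_simps)
    qed
    also have "\<dots> = wnorm (\<lambda>v. (F (t + h) v - F t v) / h - G v)"
      unfolding wnorm_def \<Delta>_def ..
    finally show ?thesis .
  qed
  have lim0: "((\<lambda>h. (kinetic_energy F (t + h) - kinetic_energy F t) / h - Dt) \<longlongrightarrow> 0) (at 0 within {h. 0 \<le> t + h})"
  proof (rule Lim_null_comparison[OF _ st(5)])
    show "\<forall>\<^sub>F h in at 0 within {h. 0 \<le> t + h}. norm ((kinetic_energy F (t + h) - kinetic_energy F t) / h - Dt) \<le> wnorm (\<lambda>v. (F (t + h) v - F t v) / h - G v)"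
      using bound by (auto simp: eventually_at_filter)
  qed
  have "((\<lambda>h. (kinetic_energy F (t + h) - kinetic_energy F t) / h) \<longlongrightarrow> Dt) (at 0 within {h. 0 \<le> t + h})"
    using lim0 by (simp add: LIM_zero_iff)
  then have "((\<lambda>h. kinetic_energy F (t + h)) has_real_derivative Dt) (at 0 within {h. 0 \<le> t + h})"
    by (simp add: has_field_derivative_iff)
  then have "(kinetic_energy F has_real_derivative Dt) (at (t + 0) within (+) t ` {h. 0 \<le> t + h})"
    by (subst DERIV_at_within_shift) simp
  moreover have "(+) t ` {h. 0 \<le> t + h} = {0..}"
    by (auto simp: image_iff intro!: exI[of _ "x - t" for x])
  ultimately show ?thesis by (simp add: Dt_eq Kg_def)
qed


theorem lemma1:
  fixes lam mu :: real and g :: "real \<Rightarrow> real"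
    and F :: "real \<Rightarrow> (real, 'n::{finite,linorder}) vec \<Rightarrow> real"
  assumes N2: "CARD('n) \<ge> 2"
    and lam: "lam > 0" and mu: "mu > 0"
    and g_meas: "g \<in> borel_measurable borel"
    and g_nonneg: "\<forall>w. g w \<ge> 0"
    and g_int: "integrable lborel g" and g_mass: "(LINT w|lborel. g w) = 1"
    and g_L2: "integrable lborel (\<lambda>w. (g w)\<^sup>2)"
    and g_mean_int: "integrable lborel (\<lambda>w. w * g w)"
    and g_mean: "(LINT w|lborel. w * g w) = 0"
    and g_mom2: "integrable lborel (\<lambda>w. w\<^sup>2 * g w)"
    and sol: "kac_solution lam mu g F"
  shows "\<forall>t\<ge>0. \<bar>kinetic_energy F t - real CARD('n) * (LINT w|lborel. w\<^sup>2 * g w)\<bar>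
            \<le> \<bar>kinetic_energy F 0 - real CARD('n) * (LINT w|lborel. w\<^sup>2 * g w)\<bar> * exp (- mu * t / 2)"
proof -
  define c where "c = real CARD('n) * (LINT w|lborel. w\<^sup>2 * g w)"
  define e where "e s = kinetic_energy F s - c" for s
  define \<phi> where "\<phi> s = e s * exp (mu * s / 2)" for s
  have de: "(e has_real_derivative (- (mu/2) * e s)) (at s within {0..})" if "s \<ge> 0" for s
  proof -
    have "(kinetic_energy F has_real_derivative (- (mu/2) * (kinetic_energy F s - c))) (at s within {0..})"
      unfolding c_def by (rule deriv_K[OF N2 g_meas g_nonneg g_int g_mass g_mom2 sol that])
    then have "((\<lambda>s. kinetic_energy F s - c) has_real_derivative (- (mu/2) * (kinetic_energy F s - c))) (at s within {0..})"
      by (rule derivative_eq_intros) auto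
    then show ?thesis unfolding e_def[abs_def] .
  qed
  have dphi: "(\<phi> has_derivative (\<lambda>h. 0)) (at s within {0..})" if "s \<in> {0..}" for s
  proof -
    have s0: "s \<ge> 0" using that by simp
    have dexp: "((\<lambda>s. exp (mu * s / 2)) has_real_derivative exp (mu * s / 2) * (mu / 2)) (at s within {0..})"
      by (auto intro!: derivative_eq_intros)
    have "(\<phi> has_real_derivative 0) (at s within {0..})"
      unfolding \<phi>_def[abs_def]
      by (rule DERIV_cong[OF DERIV_mult[OF de[OF s0] dexp]]) (simp add: algebra_simps)
    then have "(\<phi> has_derivative (*) 0) (at s within {0..})"
      by (simp add: has_field_derivative_def)
    moreover have "((*) (0::real)) = (\<lambda>h. 0)" by auto
    ultimately show ?thesis by simp
  qed
  obtain k where k: "\<forall>x\<in>{0::real..}. \<phi> x = k"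
    using has_derivative_zero_constant[OF convex_real_interval(1) dphi] by blast
  show ?thesis
  proof (intro allI impI)
    fix t :: real assume t: "t \<ge> 0"
    have "\<phi> t = \<phi> 0" using k t by simp
    then have "e t * exp (mu * t / 2) = e 0" by (simp add: \<phi>_def)
    then have "e t = e 0 * exp (- mu * t / 2)"
      by (simp add: exp_minus field_simps)
    then have "\<bar>e t\<bar> = \<bar>e 0\<bar> * exp (- mu * t / 2)" by (simp add: abs_mult)
    then show "\<bar>kinetic_energy F t - real CARD('n) * (LINT w|lborel. w\<^sup>2 * g w)\<bar>
            \<le> \<bar>kinetic_energy F 0 - real CARD('n) * (LINT w|lborel. w\<^sup>2 * g w)\<bar> * exp (- mu * t / 2)"
      by (simp add: e_def c_def)
  qed
qed


end
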